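(* Let $0<3x_0<L$, $\gamma=\gamma(x_0,L)$, $\lambda=\lambda(x_0,L)=\frac{2L}{L+x_0}$, and let $\mathcal V$ be a one-sided admissible variation of $\gamma$. Let $\varphi,\varphi_\tau,\psi,\psi_\tau\in C^\infty[0,2L]$ be defined by $X=\varphi N+\varphi_\tau\dot\gamma$ and $X'=\psi N+\psi_\tau\dot\gamma$. Then $$\left.\frac{d^2\mathcal F(\mathcal V(\cdot,t))}{dt^2}\right|_{t=0^+}=\int_0^{2L}\Big(2H\varphi^2-\frac{2\dot\varphi^2}{H}+\frac{2\ddot\varphi^2}{H^3}\Big)ds+\lambda\int_0^{2L}\big(\psi+H\varphi_\tau^2+2\varphi\dot\varphi_\tau\big)ds+\Big[\frac{\dot\psi-2\dot\varphi\dot\varphi_\tau}{H^2}\Big]_0^{2L}.$$ If moreover $\mathcal V$ is an (two-sided) admissible variation, then $\dot\varphi(0)=\dot\varphi(2L)=0$, $\dot\psi(0)\le0$, $\dot\psi(2L)\ge0$, and hence $$\left.\frac{d^2\mathcal F(\mathcal V(\cdot,t))}{dt^2}\right|_{t=0}=\int_0^{2L}\Big(2H\varphi^2-\frac{2\dot\varphi^2}{H}+\frac{2\ddot\varphi^2}{H^3}\Big)ds+\lambda\int_0^{2L}\big(\psi+H\varphi_\tau^2+2\varphi\dot\varphi_\tau\big)ds+\Big[\frac{\dot\psi}{H^2}\Big]_0^{2L}$$ $$\ge\int_0^{2L}\Big(2H\varphi^2-\frac{2\dot\varphi^2}{H}+\frac{2\ddot\varphi^2}{H^3}\Big)ds+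\lambda\int_0^{2L}\big(\psi+H\varphi_\tau^2+2\varphi\dot\varphi_\tau\big)ds.$$
   Context: Notation: $(\xi,\eta)^\perp=(\eta,-\xi)$; for a regular curve $\gamma\in C^2([0,2L],\mathbb R^2)$, curvature $H=\langle\dot\gamma,\ddot\gamma^\perp\rangle/|\dot\gamma|^3$, normal $N=\dot\gamma^\perp/|\dot\gamma|$; strictly counterclockwise means $H>0$. A curve $\gamma=(x,y)$ is admissible if $\gamma\in C^\infty([0,2L],\mathbb R^2)$ is regular, strictly counterclockwise, injective, $\gamma(0)=(x_0,0)$, $\gamma(2L)=(-x_0,0)$, $y>0$ on $(0,2L)$. $\mathcal F(\gamma)=\int_0^{2L}|\dot\gamma|H^{-1}ds$. An admissible (resp. one-sided admissible) variation is a smooth $\mathcal V:[0,2L]\times[-t_{\mathcal V},t_{\mathcal V}]\to\mathbb R^2$ (resp. $[0,2L]\times[0,t_{\mathcal V}]$) with $\mathcal V(\cdot,0)=\gamma$ and every $\mathcal V(\cdot,t)$ admissible; velocity $X=\partial_t\mathcal V|_{t=0}$, acceleration $X'=\partial_t^2\mathcal V|_{t=0}$ (one-sided derivatives in the one-sided case). For $0<3x_0<L$: with $\sigma=\pi\sqrt{x_0/(L+x_0)}$, $k=L/\sin\sigma$, $a(s)=\arcsin((s-L)/k)$, $\gamma(x_0,L)=(x,y)$ on $[0,2L]$ with $x(s)=-\frac k2\big(\frac{\sigma}{\pi+\sigma}\sin(\tfrac{\pi+\sigma}{\sigma}a(s))+\frac{\sigma}{\pi-\sigma}\sin(\tfrac{\pi-\sigma}{\sigma}a(s))\big)$,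 $y(s)=\frac k2\big(\frac{\sigma}{\pi+\sigma}\cos(\tfrac{\pi+\sigma}{\sigma}a(s))+\frac{\sigma}{\pi-\sigma}\cos(\tfrac{\pi-\sigma}{\sigma}a(s))\big)+\frac{\pi x_0}{\sigma\tan\sigma}$. It is admissible, parametrized by arc length, with curvature $H(s)=\frac{\pi}{\sigma\sqrt{k^2-(s-L)^2}}$ satisfying $2+\frac{d^2(H^{-2})}{ds^2}=\lambda(x_0,L)$. *)

theory Defs
  imports "HOL-Analysis.Analysis"
begin

coinductive smooth_open :: "'a::euclidean_space set \<Rightarrow> ('a \<Rightarrow> 'b::real_normed_vector) \<Rightarrow> bool"
  for U where
  "f differentiable_on U \<Longrightarrow> (\<forall>i\<in>Basis. smooth_open U (\<lambda>x. frechet_derivative f (at x) i))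
     \<Longrightarrow> smooth_open U f"

definition Cinf_on :: "'a::euclidean_space set \<Rightarrow> ('a \<Rightarrow> 'b::real_normed_vector) \<Rightarrow> bool" where
  "Cinf_on S f \<longleftrightarrow> (\<exists>U g. open U \<and> S \<subseteq> U \<and> smooth_open U g \<and> (\<forall>x\<in>S. g x = f x))"

definition perp :: "real \<times> real \<Rightarrow> real \<times> real" where
  "perp v = (snd v, - fst v)"

text \<open>derivative within a set (one-sided at endpoints of an interval)\<close>
definition dv :: "real set \<Rightarrow> (real \<Rightarrow> 'b::real_normed_vector) \<Rightarrow> real \<Rightarrow> 'b" where
  "dv I f s = vector_derivative f (at s within I)"

definition curv :: "real \<Rightarrow> (real \<Rightarrow> real \<times> real) \<Rightarrow> real \<Rightarrow> real" where
  "curv L \<gamma> s = inner (dv {0..2*L} \<gamma> s) (perp (dv {0..2*L} (dv {0..2*L} \<gamma>) s))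
                    / norm (dv {0..2*L} \<gamma> s) ^ 3"

definition normal :: "real \<Rightarrow> (real \<Rightarrow> real \<times> real) \<Rightarrow> real \<Rightarrow> real \<times> real" where
  "normal L \<gamma> s = (1 / norm (dv {0..2*L} \<gamma> s)) *\<^sub>R perp (dv {0..2*L} \<gamma> s)"

definition admissible :: "real \<Rightarrow> real \<Rightarrow> (real \<Rightarrow> real \<times> real) \<Rightarrow> bool" where
  "admissible x0 L \<gamma> \<longleftrightarrow>
     Cinf_on {0..2*L} \<gamma> \<and>
     (\<forall>s\<in>{0..2*L}. dv {0..2*L} \<gamma> s \<noteq> 0) \<and>
     (\<forall>s\<in>{0..2*L}. curv L \<gamma> s > 0) \<and>
     inj_on \<gamma> {0..2*L} \<and>
     \<gamma> 0 = (x0, 0) \<and> \<gamma> (2*L) = (-x0, 0) \<and>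
     (\<forall>s\<in>{0<..<2*L}. snd (\<gamma> s) > 0)"

definition Fen :: "real \<Rightarrow> (real \<Rightarrow> real \<times> real) \<Rightarrow> real" where
  "Fen L \<gamma> = integral {0..2*L} (\<lambda>s. norm (dv {0..2*L} \<gamma> s) / curv L \<gamma> s)"

definition variation :: "real \<Rightarrow> real \<Rightarrow> (real \<Rightarrow> real \<times> real) \<Rightarrow> real set
     \<Rightarrow> (real \<Rightarrow> real \<Rightarrow> real \<times> real) \<Rightarrow> bool" where
  "variation x0 L \<gamma> T V \<longleftrightarrow>
     Cinf_on ({0..2*L} \<times> T) (\<lambda>p. V (fst p) (snd p)) \<and>
     (\<forall>s\<in>{0..2*L}. V s 0 = \<gamma> s) \<and>
     (\<forall>t\<in>T. admissible x0 L (\<lambda>s. V s t))"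

definition admissible_variation where
  "admissible_variation x0 L \<gamma> tV V \<longleftrightarrow> tV > 0 \<and> variation x0 L \<gamma> {-tV..tV} V"

definition one_sided_admissible_variation where
  "one_sided_admissible_variation x0 L \<gamma> tV V \<longleftrightarrow> tV > 0 \<and> variation x0 L \<gamma> {0..tV} V"

definition velocity :: "real set \<Rightarrow> (real \<Rightarrow> real \<Rightarrow> real \<times> real) \<Rightarrow> real \<Rightarrow> real \<times> real" where
  "velocity T V s = dv T (\<lambda>t. V s t) 0"

definition accel :: "real set \<Rightarrow> (real \<Rightarrow> real \<Rightarrow> real \<times> real) \<Rightarrow> real \<Rightarrow> real \<times> real" where
  "accel T V s = dv T (dv T (\<lambda>t. V s t)) 0"

definition sig :: "real \<Rightarrow> real \<Rightarrow> real" where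
  "sig x0 L = pi * sqrt (x0 / (L + x0))"

definition kk :: "real \<Rightarrow> real \<Rightarrow> real" where
  "kk x0 L = L / sin (sig x0 L)"

definition aa :: "real \<Rightarrow> real \<Rightarrow> real \<Rightarrow> real" where
  "aa x0 L s = arcsin ((s - L) / kk x0 L)"

definition gamma_ex :: "real \<Rightarrow> real \<Rightarrow> real \<Rightarrow> real \<times> real" where
  "gamma_ex x0 L s =
    (let \<sigma> = sig x0 L; k = kk x0 L; a = aa x0 L s in
     ( - k / 2 * (\<sigma> / (pi + \<sigma>) * sin ((pi + \<sigma>) / \<sigma> * a)
                 + \<sigma> / (pi - \<sigma>) * sin ((pi - \<sigma>) / \<sigma> * a)),
       k / 2 * (\<sigma> / (pi + \<sigma>) * cos ((pi + \<sigma>) / \<sigma> * a)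
                 + \<sigma> / (pi - \<sigma>) * cos ((pi - \<sigma>) / \<sigma> * a))
       + pi * x0 / (\<sigma> * tan \<sigma>)))"

definition lambda_ex :: "real \<Rightarrow> real \<Rightarrow> real" where
  "lambda_ex x0 L = 2 * L / (L + x0)"

definition Qform :: "real \<Rightarrow> real \<Rightarrow> (real \<Rightarrow> real) \<Rightarrow> (real \<Rightarrow> real) \<Rightarrow> (real \<Rightarrow> real) \<Rightarrow> real" where
  "Qform x0 L \<phi> \<phi>\<tau> \<psi> =
     (let H = curv L (gamma_ex x0 L); I = {0..2*L} in
       integral I (\<lambda>s. 2 * H s * (\<phi> s)\<^sup>2 - 2 * (dv I \<phi> s)\<^sup>2 / H s
                         + 2 * (dv I (dv I \<phi>) s)\<^sup>2 / H s ^ 3)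
     + lambda_ex x0 L * integral I (\<lambda>s. \<psi> s + H s * (\<phi>\<tau> s)\<^sup>2 + 2 * \<phi> s * dv I \<phi>\<tau> s))"

end

theory Submission
  imports Defs "HOL-Analysis.Analysis"
begin

definition Ds :: "(real\<times>real \<Rightarrow> real\<times>real) \<Rightarrow> real\<times>real \<Rightarrow> real\<times>real" where
  "Ds f = (\<lambda>x. frechet_derivative f (at x) (1,0))"
definition Dt :: "(real\<times>real \<Rightarrow> real\<times>real) \<Rightarrow> real\<times>real \<Rightarrow> real\<times>real" where
  "Dt f = (\<lambda>x. frechet_derivative f (at x) (0,1))"

lemma basis_10: "((1::real),(0::real)) \<in> Basis" and basis_01: "((0::real),(1::real)) \<in> Basis"
  by (auto simp: Basis_prod_def)

lemma sm_D:
  assumes "smooth_open U f"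
  shows "f differentiable_on U" "smooth_open U (Ds f)" "smooth_open U (Dt f)"
  using smooth_open.cases[OF assms] basis_10 basis_01 unfolding Ds_def Dt_def by blast+

lemma sm_hasderiv:
  fixes f :: "real\<times>real \<Rightarrow> real\<times>real"
  assumes "smooth_open U f" "open U" "x \<in> U"
  shows "(f has_derivative frechet_derivative f (at x)) (at x)"
proof -
  have "f differentiable (at x within U)" using sm_D(1)[OF assms(1)] assms(3)
    by (auto simp: differentiable_on_def)
  then have "f differentiable (at x)" using at_within_open[OF assms(3,2)] by simp
  then show ?thesis using frechet_derivative_works by blast
qed

lemma sm_cont: fixes f :: "real\<times>real \<Rightarrow> real\<times>real" assumes "smooth_open U f" "open U" shows "continuous_on U f"
  using sm_D(1)[OF assms(1)] differentiable_imp_continuous_on by blast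

lemma sm_s:
  assumes "smooth_open U f" "open U" "(s,t) \<in> U"
  shows "((\<lambda>s. f (s,t)) has_vector_derivative Ds f (s,t)) (at s within S)"
proof -
  let ?F = "frechet_derivative f (at (s,t))"
  have d: "(f has_derivative ?F) (at (s,t))" using sm_hasderiv[OF assms] .
  have lin: "linear ?F" using has_derivative_linear[OF d] .
  have p: "((\<lambda>s. (s,t)) has_derivative (\<lambda>h. (h,0))) (at s within S)"
    by (auto intro!: derivative_eq_intros)
  have "((\<lambda>s. f (s,t)) has_derivative (\<lambda>h. ?F (h,0))) (at s within S)"
    using has_derivative_in_compose[OF p, of f ?F] d has_derivative_at_withinI
    by (simp add: o_def has_derivative_at_withinI)
  moreover have "(\<lambda>h. ?F (h,0)) = (\<lambda>h. h *\<^sub>R ?F (1,0))"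
  proof
    fix h :: real
    have "(h,0) = h *\<^sub>R ((1::real),(0::real))" by simp
    then show "?F (h,0) = h *\<^sub>R ?F (1,0)" using linear_scale[OF lin] by metis
  qed
  ultimately show ?thesis unfolding has_vector_derivative_def Ds_def by simp
qed

lemma sm_t:
  assumes "smooth_open U f" "open U" "(s,t) \<in> U"
  shows "((\<lambda>t. f (s,t)) has_vector_derivative Dt f (s,t)) (at t within S)"
proof -
  let ?F = "frechet_derivative f (at (s,t))"
  have d: "(f has_derivative ?F) (at (s,t))" using sm_hasderiv[OF assms] .
  have lin: "linear ?F" using has_derivative_linear[OF d] .
  have p: "((\<lambda>t. (s,t)) has_derivative (\<lambda>h. (0,h))) (at t within S)"
    by (auto intro!: derivative_eq_intros)
  have "((\<lambda>t. f (s,t)) has_derivative (\<lambda>h. ?F (0,h))) (at t within S)"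
    using has_derivative_in_compose[OF p, of f ?F] d
    by (simp add: o_def has_derivative_at_withinI)
  moreover have "(\<lambda>h. ?F (0,h)) = (\<lambda>h. h *\<^sub>R ?F (0,1))"
  proof
    fix h :: real
    have "(0,h) = h *\<^sub>R ((0::real),(1::real))" by simp
    then show "?F (0,h) = h *\<^sub>R ?F (0,1)" using linear_scale[OF lin] by metis
  qed
  ultimately show ?thesis unfolding has_vector_derivative_def Dt_def by simp
qed

lemma fd_cong:
  assumes "open U" "x \<in> U" "\<And>y. y \<in> U \<Longrightarrow> F y = G y"
  shows "frechet_derivative F (at x) = frechet_derivative G (at x)"
proof -
  have "\<And>f'. (F has_derivative f') (at x) \<longleftrightarrow> (G has_derivative f') (at x)"
    using has_derivative_transform_within_open[OF _ assms(1,2)] assms(3) by metis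
  then show ?thesis unfolding frechet_derivative_def by simp
qed

lemma Ds_cong: "open U \<Longrightarrow> x \<in> U \<Longrightarrow> (\<And>y. y \<in> U \<Longrightarrow> F y = G y) \<Longrightarrow> Ds F x = Ds G x"
  unfolding Ds_def using fd_cong by metis
lemma Dt_cong: "open U \<Longrightarrow> x \<in> U \<Longrightarrow> (\<And>y. y \<in> U \<Longrightarrow> F y = G y) \<Longrightarrow> Dt F x = Dt G x"
  unfolding Dt_def using fd_cong by metis

lemma vd_unique:
  fixes f :: "real \<Rightarrow> 'a::real_normed_vector"
  assumes "a < b" "x \<in> {a..b}" "(f has_vector_derivative f') (at x within {a..b})"
    "(f has_vector_derivative f'') (at x within {a..b})"
  shows "f' = f''"
  using vector_derivative_unique_within_closed_interval[of a b x f f' f''] assms by simp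

lemma box_in_ball:
  assumes "ball (s0,t0) e0 \<subseteq> U" "e0 > 0"
  shows "{s0 - e0/3..s0 + e0/3} \<times> {t0 - e0/3..t0 + e0/3} \<subseteq> U"
proof
  fix p assume p: "p \<in> {s0 - e0/3..s0 + e0/3} \<times> {t0 - e0/3..t0 + e0/3}"
  obtain s t where st: "p = (s,t)" by force
  have "dist (s0,t0) (s,t) = sqrt ((dist s0 s)\<^sup>2 + (dist t0 t)\<^sup>2)"
    by (simp add: dist_prod_def)
  also have "\<dots> \<le> \<bar>dist s0 s\<bar> + \<bar>dist t0 t\<bar>" by (rule sqrt_sum_squares_le_sum_abs)
  also have "\<dots> < e0" using p st assms(2) by (auto simp: dist_real_def)
  finally show "p \<in> U" using assms(1) st by auto
qed

lemma schwarz: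
  fixes f :: "real\<times>real \<Rightarrow> real\<times>real"
  assumes sm: "smooth_open U f" and U: "open U" and x: "x \<in> U"
  shows "Ds (Dt f) x = Dt (Ds f) x"
proof -
  obtain s0 t0 where x0: "x = (s0,t0)" by force
  obtain e0 where e0: "e0 > 0" "ball x e0 \<subseteq> U" using U x open_contains_ball by blast
  define e where "e = e0/3"
  have e: "e > 0" using e0 e_def by simp
  define a where "a = s0 - e"
  define b where "b = s0 + e"
  define c where "c = t0 - e"
  define d where "d = t0 + e"
  have box: "{a..b} \<times> {c..d} \<subseteq> U" using box_in_ball[of s0 t0 e0 U] e0 x0
    unfolding a_def b_def c_def d_def e_def by auto
  have ab: "a < b" "c < d" using e by (auto simp: a_def b_def c_def d_def)
  have s0in: "s0 \<in> {a..b}" and t0in: "t0 \<in> {c..d}" using e by (auto simp: a_def b_def c_def d_def)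
  have sm1: "smooth_open U (Ds f)" and sm2: "smooth_open U (Dt (Ds f))" and sm3: "smooth_open U (Dt f)"
    using sm_D sm by blast+
  have c2: "continuous_on U (Dt (Ds f))" using sm_cont[OF sm2 U] .
  have c1: "continuous_on U (Ds f)" using sm_cont[OF sm1 U] .
  have key: "Dt f (s,t0) - Dt f (a,t0) = integral {a..s} (\<lambda>r. Dt (Ds f) (r,t0))" if s: "s \<in> {a..b}" for s
  proof -
    have ftc: "f (s,t) - f (a,t) = integral {a..s} (\<lambda>r. Ds f (r,t))" if t: "t \<in> {c..d}" for t
    proof -
      have "((\<lambda>r. Ds f (r,t)) has_integral (f (s,t) - f (a,t))) {a..s}"
        apply (rule fundamental_theorem_of_calculus[of a s "\<lambda>r. f (r,t)"])
        using s apply simp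
        apply (rule sm_s[OF sm U]) using box s t by auto
      then show ?thesis by (simp add: integral_unique)
    qed
    have cbx: "cbox a s = {a..s}" by simp
    have lb: "((\<lambda>t. integral (cbox a s) (\<lambda>r. Ds f (r,t))) has_vector_derivative
              integral (cbox a s) (\<lambda>r. Dt (Ds f) (r,t0))) (at t0 within {c..d})"
    proof (rule leibniz_rule_vector_derivative[where f="\<lambda>t r. Ds f (r,t)" and fx="\<lambda>t r. Dt (Ds f) (r,t)"])
      fix t r assume "t \<in> {c..d}" "r \<in> cbox a s"
      then have "(r,t) \<in> U" using box s by auto
      then show "((\<lambda>t. Ds f (r,t)) has_vector_derivative Dt (Ds f) (r,t)) (at t within {c..d})"
        using sm_t[OF sm1 U] by blast
    next
      fix t assume t: "t \<in> {c..d}"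
      have "continuous_on {a..s} (\<lambda>r. Ds f (r,t))"
        apply (rule continuous_on_compose2[OF c1, where f="\<lambda>r. (r,t)"])
        using box s t by (auto intro!: continuous_intros)
      then show "(\<lambda>r. Ds f (r,t)) integrable_on cbox a s" using integrable_continuous_real by auto
    next
      have eq: "(\<lambda>(t, r). Dt (Ds f) (r,t)) = (\<lambda>x. Dt (Ds f) (snd x, fst x))" by auto
      show "continuous_on ({c..d} \<times> cbox a s) (\<lambda>(t, r). Dt (Ds f) (r,t))"
        unfolding eq
        apply (rule continuous_on_compose2[OF c2, where f="\<lambda>x. (snd x, fst x)"])
        using box s by (auto intro!: continuous_intros)
    qed (use t0in in auto)
    have lhs: "((\<lambda>t. f (s,t) - f (a,t)) has_vector_derivative Dt f (s,t0) - Dt f (a,t0)) (at t0 within {c..d})"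
      using box s t0in ab by (auto intro!: derivative_intros sm_t[OF sm U])
    have lb2: "((\<lambda>t. f (s,t) - f (a,t)) has_vector_derivative
              integral {a..s} (\<lambda>r. Dt (Ds f) (r,t0))) (at t0 within {c..d})"
      apply (rule has_vector_derivative_transform_within[OF lb[unfolded cbx], of 1])
      using t0in ftc by auto
    show ?thesis
      using vd_unique[OF ab(2) _ lhs lb2] t0in by simp
  qed
  have inU: "(s0,t0) \<in> U" using box s0in t0in by auto
  have "((\<lambda>s. Dt f (s,t0) - Dt f (a,t0)) has_vector_derivative Ds (Dt f) (s0,t0) - 0) (at s0 within {a..b})"
    by (intro has_vector_derivative_diff sm_s[OF sm3 U inU] has_vector_derivative_const)
  then have r1: "((\<lambda>s. Dt f (s,t0) - Dt f (a,t0)) has_vector_derivative Ds (Dt f) (s0,t0)) (at s0 within {a..b})"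
    by simp
  have ci: "continuous_on {a..b} (\<lambda>r. Dt (Ds f) (r,t0))"
    apply (rule continuous_on_compose2[OF c2, where f="\<lambda>r. (r,t0)"])
    using box t0in by (auto intro!: continuous_intros)
  have r2: "((\<lambda>s. integral {a..s} (\<lambda>r. Dt (Ds f) (r,t0))) has_vector_derivative Dt (Ds f) (s0,t0)) (at s0 within {a..b})"
    using integral_has_vector_derivative[OF ci s0in] by simp
  have r3: "((\<lambda>s. Dt f (s,t0) - Dt f (a,t0)) has_vector_derivative Dt (Ds f) (s0,t0)) (at s0 within {a..b})"
    apply (rule has_vector_derivative_transform_within[OF r2, of 1])
    using s0in key by auto
  show ?thesis
    using vd_unique[OF ab(1) _ r1 r3] s0in x0 by simp
qed


definition th :: "real \<Rightarrow> real \<Rightarrow> real \<Rightarrow> real" where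
  "th x0 L s = pi / sig x0 L * aa x0 L s"
definition Tex :: "real \<Rightarrow> real \<Rightarrow> real \<Rightarrow> real \<times> real" where
  "Tex x0 L s = (- cos (th x0 L s), - sin (th x0 L s))"
definition Nex :: "real \<Rightarrow> real \<Rightarrow> real \<Rightarrow> real \<times> real" where
  "Nex x0 L s = (- sin (th x0 L s), cos (th x0 L s))"
definition hh :: "real \<Rightarrow> real \<Rightarrow> real \<Rightarrow> real" where
  "hh x0 L s = sig x0 L / pi * sqrt ((kk x0 L)\<^sup>2 - (s - L)\<^sup>2)"
definition hh1 :: "real \<Rightarrow> real \<Rightarrow> real \<Rightarrow> real" where
  "hh1 x0 L s = - (sig x0 L / pi) * (s - L) / sqrt ((kk x0 L)\<^sup>2 - (s - L)\<^sup>2)"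
definition hh2 :: "real \<Rightarrow> real \<Rightarrow> real \<Rightarrow> real" where
  "hh2 x0 L s = - (sig x0 L / pi) * (kk x0 L)\<^sup>2 / (sqrt ((kk x0 L)\<^sup>2 - (s - L)\<^sup>2)) ^ 3"

lemma alg1: "(r::real) \<noteq> 0 \<Longrightarrow> (1 * r - a * (- a / r)) / (r * r) = (r * r + a\<^sup>2) / (r * r * r)"
  by (simp add: field_simps power2_eq_square)

lemma alg2: "(r::real) \<noteq> 0 \<Longrightarrow> 2 * (- c * a / r)\<^sup>2 + 2 * (c * r) * (- c * K / (r * r * r)) = 2 * c\<^sup>2 * (a\<^sup>2 - K) / (r * r)"
  by (simp add: field_simps power2_eq_square)

context
  fixes x0 L :: real
  assumes x0: "0 < x0" and xL: "3 * x0 < L"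
begin

lemma L_pos: "L > 0" using x0 xL by simp

lemma sig_bounds: "0 < sig x0 L" "sig x0 L < pi/2"
proof -
  have q: "0 < x0 / (L + x0)" using x0 xL by simp
  have q2: "x0 / (L + x0) < 1/4" using x0 xL by (simp add: field_simps)
  have "sqrt (x0 / (L + x0)) < sqrt (1/4)" using q2 by (simp only: real_sqrt_less_iff)
  moreover have "sqrt (1/4::real) = 1/2" by (simp add: real_sqrt_divide)
  ultimately have "sqrt (x0 / (L + x0)) < 1/2" by simp
  then show "sig x0 L < pi/2" unfolding sig_def using pi_gt_zero
    by (metis divide_inverse_commute mult.commute mult_less_cancel_right_pos inverse_eq_divide times_divide_eq_left mult.right_neutral)
  show "0 < sig x0 L" unfolding sig_def using q by simp
qed

lemma sig_sq: "(sig x0 L / pi)\<^sup>2 = x0 / (L + x0)"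
  using x0 xL by (simp add: sig_def power_mult_distrib)

lemma sin_sig: "0 < sin (sig x0 L)" "sin (sig x0 L) < 1"
proof -
  show "0 < sin (sig x0 L)" using sig_bounds by (intro sin_gt_zero) auto
  have "sin (sig x0 L) < sin (pi/2)" using sig_bounds
    by (intro sin_monotone_2pi) auto
  then show "sin (sig x0 L) < 1" by simp
qed


lemma sig_ne: "sig x0 L \<noteq> 0" "pi + sig x0 L \<noteq> 0" "pi - sig x0 L \<noteq> 0"
  using sig_bounds pi_gt_zero by auto

lemma kk_gt: "L < kk x0 L" "0 < kk x0 L"
proof -
  have "L < L / sin (sig x0 L)" using sin_sig L_pos by (simp add: less_divide_eq)
  then show "L < kk x0 L" by (simp add: kk_def)
  then show "0 < kk x0 L" using L_pos by simp
qed

definition Oset :: "real set" where "Oset = {s. \<bar>s - L\<bar> < kk x0 L}"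

lemma I_sub_OO: "s \<in> {0..2*L} \<Longrightarrow> s \<in> Oset"
  using kk_gt unfolding Oset_def by auto

lemma open_OO: "open Oset"
  unfolding Oset_def by (intro open_Collect_less continuous_intros)

lemma z_bounds: assumes "s \<in> Oset" shows "-1 < (s - L) / kk x0 L" "(s - L) / kk x0 L < 1"
  using assms kk_gt unfolding Oset_def by (auto simp: field_simps abs_less_iff)

lemma Q_pos: assumes "s \<in> Oset" shows "0 < (kk x0 L)\<^sup>2 - (s - L)\<^sup>2"
proof -
  have "\<bar>s - L\<bar> < \<bar>kk x0 L\<bar>" using assms kk_gt unfolding Oset_def by simp
  then have "\<bar>s - L\<bar>\<^sup>2 < \<bar>kk x0 L\<bar>\<^sup>2" by (intro power_strict_mono) auto
  then have "(s - L)\<^sup>2 < (kk x0 L)\<^sup>2" by simp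
  then show ?thesis by simp
qed

lemma sqrt_rel: assumes "s \<in> Oset"
  shows "kk x0 L * sqrt (1 - ((s - L) / kk x0 L)\<^sup>2) = sqrt ((kk x0 L)\<^sup>2 - (s - L)\<^sup>2)"
proof -
  have k: "kk x0 L > 0" using kk_gt by simp
  have "(kk x0 L)\<^sup>2 - (s - L)\<^sup>2 = (kk x0 L)\<^sup>2 * (1 - ((s - L) / kk x0 L)\<^sup>2)"
    using k by (simp add: field_simps power2_eq_square)
  then have "sqrt ((kk x0 L)\<^sup>2 - (s - L)\<^sup>2) = sqrt ((kk x0 L)\<^sup>2) * sqrt (1 - ((s - L) / kk x0 L)\<^sup>2)"
    by (simp add: real_sqrt_mult)
  then show ?thesis using k by simp
qed

lemma cos_aa: assumes "s \<in> Oset"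
  shows "kk x0 L * cos (aa x0 L s) = sqrt ((kk x0 L)\<^sup>2 - (s - L)\<^sup>2)"
  using cos_arcsin[of "(s - L) / kk x0 L"] z_bounds[OF assms] sqrt_rel[OF assms]
  unfolding aa_def by simp

definition HH :: "real \<Rightarrow> real" where "HH s = 1 / hh x0 L s"

lemma hh_pos: "s \<in> Oset \<Longrightarrow> 0 < hh x0 L s"
  unfolding hh_def using sig_bounds Q_pos by simp

lemma aa_deriv: assumes "s \<in> Oset"
  shows "(aa x0 L has_real_derivative 1 / sqrt ((kk x0 L)\<^sup>2 - (s - L)\<^sup>2)) (at s)"
proof -
  have "((\<lambda>s. arcsin ((s - L) / kk x0 L)) has_real_derivative
       inverse (sqrt (1 - ((s - L) / kk x0 L)\<^sup>2)) * (1 / kk x0 L)) (at s)"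
    using kk_gt by (auto intro!: derivative_eq_intros z_bounds[OF assms])
  moreover have "inverse (sqrt (1 - ((s - L) / kk x0 L)\<^sup>2)) * (1 / kk x0 L) = 1 / sqrt ((kk x0 L)\<^sup>2 - (s - L)\<^sup>2)"
    using sqrt_rel[OF assms, symmetric] by (simp add: field_simps)
  ultimately show ?thesis unfolding aa_def[abs_def] by simp
qed

lemma th_deriv: assumes "s \<in> Oset"
  shows "(th x0 L has_real_derivative HH s) (at s)"
proof -
  have "((\<lambda>s. pi / sig x0 L * aa x0 L s) has_real_derivative pi / sig x0 L * (1 / sqrt ((kk x0 L)\<^sup>2 - (s - L)\<^sup>2))) (at s)"
    using sig_ne by (auto intro!: derivative_eq_intros aa_deriv[OF assms])
  moreover have "pi / sig x0 L * (1 / sqrt ((kk x0 L)\<^sup>2 - (s - L)\<^sup>2)) = HH s"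
    unfolding HH_def hh_def using sig_ne by (simp add: field_simps)
  ultimately show ?thesis unfolding th_def[abs_def] by simp
qed

lemma kA: assumes "s \<in> Oset"
  shows "kk x0 L * cos (aa x0 L s) * (1 / sqrt ((kk x0 L)\<^sup>2 - (s - L)\<^sup>2)) = 1"
  using cos_aa[OF assms] Q_pos[OF assms] by simp

lemma gamma_fst_eq: "(\<lambda>s. fst (gamma_ex x0 L s)) = (\<lambda>s. - kk x0 L / 2 * (sig x0 L / (pi + sig x0 L) * sin (th x0 L s + aa x0 L s)
                 + sig x0 L / (pi - sig x0 L) * sin (th x0 L s - aa x0 L s)))"
proof -
  have "(pi + sig x0 L) / sig x0 L * aa x0 L s = th x0 L s + aa x0 L s"
       "(pi - sig x0 L) / sig x0 L * aa x0 L s = th x0 L s - aa x0 L s" for s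
    unfolding th_def using sig_ne by (simp_all add: field_simps)
  then show ?thesis unfolding gamma_ex_def Let_def by simp
qed

lemma gamma_snd_eq: "(\<lambda>s. snd (gamma_ex x0 L s)) = (\<lambda>s. kk x0 L / 2 * (sig x0 L / (pi + sig x0 L) * cos (th x0 L s + aa x0 L s)
                 + sig x0 L / (pi - sig x0 L) * cos (th x0 L s - aa x0 L s)) + pi * x0 / (sig x0 L * tan (sig x0 L)))"
proof -
  have "(pi + sig x0 L) / sig x0 L * aa x0 L s = th x0 L s + aa x0 L s"
       "(pi - sig x0 L) / sig x0 L * aa x0 L s = th x0 L s - aa x0 L s" for s
    unfolding th_def using sig_ne by (simp_all add: field_simps)
  then show ?thesis unfolding gamma_ex_def Let_def by simp
qed

lemma sin_part_deriv: assumes "s \<in> Oset" and c: "c \<noteq> 0"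
  shows "((\<lambda>s. 1 / c * sin (c * aa x0 L s)) has_real_derivative
      cos (c * aa x0 L s) * (1 / sqrt ((kk x0 L)\<^sup>2 - (s - L)\<^sup>2))) (at s)"
proof -
  have "((\<lambda>s. 1 / c * sin (c * aa x0 L s)) has_real_derivative
      1 / c * (cos (c * aa x0 L s) * (c * (1 / sqrt ((kk x0 L)\<^sup>2 - (s - L)\<^sup>2))))) (at s)"
    by (intro DERIV_cmult DERIV_chain2[OF DERIV_sin] aa_deriv[OF assms(1)])
  then show ?thesis using c by simp
qed

lemma cos_part_deriv: assumes "s \<in> Oset" and c: "c \<noteq> 0"
  shows "((\<lambda>s. 1 / c * cos (c * aa x0 L s)) has_real_derivative
      - sin (c * aa x0 L s) * (1 / sqrt ((kk x0 L)\<^sup>2 - (s - L)\<^sup>2))) (at s)"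
proof -
  have "((\<lambda>s. 1 / c * cos (c * aa x0 L s)) has_real_derivative
      1 / c * (- sin (c * aa x0 L s) * (c * (1 / sqrt ((kk x0 L)\<^sup>2 - (s - L)\<^sup>2))))) (at s)"
    by (intro DERIV_cmult DERIV_chain2[OF DERIV_cos] aa_deriv[OF assms(1)])
  then show ?thesis using c by simp
qed

lemma pm_eq: "(pi + sig x0 L) / sig x0 L * aa x0 L s = th x0 L s + aa x0 L s"
       "(pi - sig x0 L) / sig x0 L * aa x0 L s = th x0 L s - aa x0 L s"
  unfolding th_def using sig_ne by (simp_all add: field_simps)

lemma gamma_fst_deriv: assumes "s \<in> Oset"
  shows "((\<lambda>s. fst (gamma_ex x0 L s)) has_real_derivative - cos (th x0 L s)) (at s)"
proof -
  define A where "A = 1 / sqrt ((kk x0 L)\<^sup>2 - (s - L)\<^sup>2)"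
  define p where "p = (pi + sig x0 L) / sig x0 L"
  define m where "m = (pi - sig x0 L) / sig x0 L"
  have p: "p \<noteq> 0" "sig x0 L / (pi + sig x0 L) = 1 / p" using sig_ne unfolding p_def by auto
  have m: "m \<noteq> 0" "sig x0 L / (pi - sig x0 L) = 1 / m" using sig_ne unfolding m_def by auto
  have fe: "(\<lambda>s. fst (gamma_ex x0 L s)) = (\<lambda>s. - kk x0 L / 2 * (1 / p * sin (p * aa x0 L s) + 1 / m * sin (m * aa x0 L s)))"
    unfolding gamma_ex_def Let_def p(2) m(2) p_def m_def by simp
  have d: "((\<lambda>s. - kk x0 L / 2 * (1 / p * sin (p * aa x0 L s) + 1 / m * sin (m * aa x0 L s))) has_real_derivative
      - kk x0 L / 2 * (cos (p * aa x0 L s) * A + cos (m * aa x0 L s) * A)) (at s)"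
    unfolding A_def by (intro DERIV_cmult DERIV_add sin_part_deriv[OF assms] p m)
  have "cos (p * aa x0 L s) + cos (m * aa x0 L s) = 2 * cos (th x0 L s) * cos (aa x0 L s)"
    unfolding p_def m_def pm_eq by (simp add: cos_add cos_diff)
  then have "- kk x0 L / 2 * (cos (p * aa x0 L s) * A + cos (m * aa x0 L s) * A)
       = - (kk x0 L * cos (aa x0 L s) * A) * cos (th x0 L s)"
    by (simp add: algebra_simps) (metis distrib_left mult.commute)
  also have "\<dots> = - cos (th x0 L s)"
  proof -
    have kA': "kk x0 L * cos (aa x0 L s) * A = 1" unfolding A_def by (rule kA[OF assms])
    show ?thesis by (simp add: kA')
  qed
  finally show ?thesis using d fe by simp
qed

lemma gamma_snd_deriv: assumes "s \<in> Oset"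
  shows "((\<lambda>s. snd (gamma_ex x0 L s)) has_real_derivative - sin (th x0 L s)) (at s)"
proof -
  define A where "A = 1 / sqrt ((kk x0 L)\<^sup>2 - (s - L)\<^sup>2)"
  define p where "p = (pi + sig x0 L) / sig x0 L"
  define m where "m = (pi - sig x0 L) / sig x0 L"
  define C where "C = pi * x0 / (sig x0 L * tan (sig x0 L))"
  have p: "p \<noteq> 0" "sig x0 L / (pi + sig x0 L) = 1 / p" using sig_ne unfolding p_def by auto
  have m: "m \<noteq> 0" "sig x0 L / (pi - sig x0 L) = 1 / m" using sig_ne unfolding m_def by auto
  have fe: "(\<lambda>s. snd (gamma_ex x0 L s)) = (\<lambda>s. kk x0 L / 2 * (1 / p * cos (p * aa x0 L s) + 1 / m * cos (m * aa x0 L s)) + C)"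
    unfolding gamma_ex_def Let_def p(2) m(2) p_def m_def C_def by simp
  have d: "((\<lambda>s. kk x0 L / 2 * (1 / p * cos (p * aa x0 L s) + 1 / m * cos (m * aa x0 L s)) + C) has_real_derivative
      kk x0 L / 2 * (- sin (p * aa x0 L s) * A + - sin (m * aa x0 L s) * A) + 0) (at s)"
    unfolding A_def by (intro DERIV_cmult DERIV_add cos_part_deriv[OF assms] p m DERIV_const)
  have "sin (p * aa x0 L s) + sin (m * aa x0 L s) = 2 * sin (th x0 L s) * cos (aa x0 L s)"
    unfolding p_def m_def pm_eq by (simp add: sin_add sin_diff)
  then have "kk x0 L / 2 * (- sin (p * aa x0 L s) * A + - sin (m * aa x0 L s) * A) + 0
       = - (kk x0 L * cos (aa x0 L s) * A) * sin (th x0 L s)"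
    by (simp add: algebra_simps) (metis distrib_left mult.commute)
  also have "\<dots> = - sin (th x0 L s)"
  proof -
    have kA': "kk x0 L * cos (aa x0 L s) * A = 1" unfolding A_def by (rule kA[OF assms])
    show ?thesis by (simp add: kA')
  qed
  finally show ?thesis using d fe by simp
qed

lemma gamma_deriv: assumes "s \<in> Oset"
  shows "(gamma_ex x0 L has_vector_derivative Tex x0 L s) (at s)"
proof -
  have "((\<lambda>s. (fst (gamma_ex x0 L s), snd (gamma_ex x0 L s))) has_vector_derivative
        (- cos (th x0 L s), - sin (th x0 L s))) (at s)"
    using gamma_fst_deriv[OF assms] gamma_snd_deriv[OF assms]
    by (intro has_vector_derivative_Pair) (simp_all add: has_real_derivative_iff_has_vector_derivative)
  then show ?thesis by (simp add: Tex_def)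
qed

lemma Tex_deriv: assumes "s \<in> Oset"
  shows "(Tex x0 L has_vector_derivative (- HH s) *\<^sub>R Nex x0 L s) (at s)"
proof -
  have "((\<lambda>s. (- cos (th x0 L s), - sin (th x0 L s))) has_vector_derivative
        (- (- sin (th x0 L s) * HH s), - (cos (th x0 L s) * HH s))) (at s)"
  proof (intro has_vector_derivative_Pair)
    show "((\<lambda>s. - cos (th x0 L s)) has_vector_derivative - (- sin (th x0 L s) * HH s)) (at s)"
      unfolding has_real_derivative_iff_has_vector_derivative[symmetric]
      using th_deriv[OF assms] by (auto intro!: derivative_eq_intros)
    show "((\<lambda>s. - sin (th x0 L s)) has_vector_derivative - (cos (th x0 L s) * HH s)) (at s)"
      unfolding has_real_derivative_iff_has_vector_derivative[symmetric]
      using th_deriv[OF assms] by (auto intro!: derivative_eq_intros)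
  qed
  then show ?thesis unfolding Tex_def[abs_def] Nex_def by (simp add: algebra_simps)
qed

lemma Nex_deriv: assumes "s \<in> Oset"
  shows "(Nex x0 L has_vector_derivative HH s *\<^sub>R Tex x0 L s) (at s)"
proof -
  have "((\<lambda>s. (- sin (th x0 L s), cos (th x0 L s))) has_vector_derivative
        (- (cos (th x0 L s) * HH s), - sin (th x0 L s) * HH s)) (at s)"
  proof (intro has_vector_derivative_Pair)
    show "((\<lambda>s. - sin (th x0 L s)) has_vector_derivative - (cos (th x0 L s) * HH s)) (at s)"
      unfolding has_real_derivative_iff_has_vector_derivative[symmetric]
      using th_deriv[OF assms] by (auto intro!: derivative_eq_intros)
    show "((\<lambda>s. cos (th x0 L s)) has_vector_derivative - sin (th x0 L s) * HH s) (at s)"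
      unfolding has_real_derivative_iff_has_vector_derivative[symmetric]
      using th_deriv[OF assms] by (auto intro!: derivative_eq_intros)
  qed
  then show ?thesis unfolding Nex_def[abs_def] Tex_def by (simp add: algebra_simps)
qed

lemma sqrtQ_deriv: assumes "s \<in> Oset"
  shows "((\<lambda>s. sqrt ((kk x0 L)\<^sup>2 - (s - L)\<^sup>2)) has_real_derivative
     - (s - L) / sqrt ((kk x0 L)\<^sup>2 - (s - L)\<^sup>2)) (at s)"
proof -
  have dQ: "((\<lambda>s. (kk x0 L)\<^sup>2 - (s - L)\<^sup>2) has_real_derivative - (2 * (s - L))) (at s)"
    by (auto intro!: derivative_eq_intros)
  have "((\<lambda>s. sqrt ((kk x0 L)\<^sup>2 - (s - L)\<^sup>2)) has_real_derivative
     inverse (sqrt ((kk x0 L)\<^sup>2 - (s - L)\<^sup>2)) / 2 * (- (2 * (s - L)))) (at s)"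
    by (rule DERIV_chain2[OF DERIV_real_sqrt[OF Q_pos[OF assms]] dQ])
  moreover have "inverse (sqrt ((kk x0 L)\<^sup>2 - (s - L)\<^sup>2)) / 2 * (- (2 * (s - L))) =
     - (s - L) / sqrt ((kk x0 L)\<^sup>2 - (s - L)\<^sup>2)" using Q_pos[OF assms] by (simp add: field_simps)
  ultimately show ?thesis by (metis (no_types))
qed

lemma hh_deriv: assumes "s \<in> Oset"
  shows "(hh x0 L has_real_derivative hh1 x0 L s) (at s)"
proof -
  have "((\<lambda>s. sig x0 L / pi * sqrt ((kk x0 L)\<^sup>2 - (s - L)\<^sup>2)) has_real_derivative
      sig x0 L / pi * (- (s - L) / sqrt ((kk x0 L)\<^sup>2 - (s - L)\<^sup>2))) (at s)"
    by (rule DERIV_cmult[OF sqrtQ_deriv[OF assms]])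
  moreover have "sig x0 L / pi * (- (s - L) / sqrt ((kk x0 L)\<^sup>2 - (s - L)\<^sup>2)) = hh1 x0 L s"
    unfolding hh1_def using Q_pos[OF assms] by (simp add: field_simps)
  ultimately show ?thesis unfolding hh_def[abs_def] by simp
qed

lemma hh1_deriv: assumes "s \<in> Oset"
  shows "(hh1 x0 L has_real_derivative hh2 x0 L s) (at s)"
proof -
  define Q where "Q = (kk x0 L)\<^sup>2 - (s - L)\<^sup>2"
  have Q: "Q > 0" using Q_pos[OF assms] Q_def by simp
  define r where "r = sqrt Q"
  have r: "r > 0" "r * r = Q" using Q r_def by auto
  have d0: "((\<lambda>s. (s - L) / sqrt ((kk x0 L)\<^sup>2 - (s - L)\<^sup>2)) has_real_derivative
       (1 * sqrt ((kk x0 L)\<^sup>2 - (s - L)\<^sup>2) - (s - L) * (- (s - L) / sqrt ((kk x0 L)\<^sup>2 - (s - L)\<^sup>2)))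
        / (sqrt ((kk x0 L)\<^sup>2 - (s - L)\<^sup>2) * sqrt ((kk x0 L)\<^sup>2 - (s - L)\<^sup>2))) (at s)"
    apply (rule DERIV_divide[OF _ sqrtQ_deriv[OF assms]])
     apply (auto intro!: derivative_eq_intros)[1]
    using Q unfolding Q_def by simp
  have eq: "(1 * sqrt ((kk x0 L)\<^sup>2 - (s - L)\<^sup>2) - (s - L) * (- (s - L) / sqrt ((kk x0 L)\<^sup>2 - (s - L)\<^sup>2)))
        / (sqrt ((kk x0 L)\<^sup>2 - (s - L)\<^sup>2) * sqrt ((kk x0 L)\<^sup>2 - (s - L)\<^sup>2)) = (kk x0 L)\<^sup>2 / (r * r * r)"
    unfolding Q_def[symmetric] r_def[symmetric]
  proof -
    have "(1 * r - (s - L) * (- (s - L) / r)) / (r * r) = (r * r + (s - L)\<^sup>2) / (r * r * r)"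
      using r by (intro alg1) simp
    also have "r * r + (s - L)\<^sup>2 = (kk x0 L)\<^sup>2" using r Q_def by simp
    finally show "(1 * r - (s - L) * (- (s - L) / r)) / (r * r) = (kk x0 L)\<^sup>2 / (r * r * r)" .
  qed
  have "((\<lambda>s. - (sig x0 L / pi) * ((s - L) / sqrt ((kk x0 L)\<^sup>2 - (s - L)\<^sup>2))) has_real_derivative
          - (sig x0 L / pi) * ((kk x0 L)\<^sup>2 / (r * r * r))) (at s)"
    by (rule DERIV_cmult[OF d0[unfolded eq]])
  moreover have "(\<lambda>s. - (sig x0 L / pi) * ((s - L) / sqrt ((kk x0 L)\<^sup>2 - (s - L)\<^sup>2))) = hh1 x0 L"
    unfolding hh1_def[abs_def] by (simp add: field_simps)
  moreover have "- (sig x0 L / pi) * ((kk x0 L)\<^sup>2 / (r * r * r)) = hh2 x0 L s"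
    unfolding hh2_def Q_def[symmetric] r_def[symmetric] by (simp add: power3_eq_cube)
  ultimately show ?thesis by simp
qed

lemma hh_ode: assumes "s \<in> Oset"
  shows "2 * (hh1 x0 L s)\<^sup>2 + 2 * hh x0 L s * hh2 x0 L s = lambda_ex x0 L - 2"
proof -
  define Q where "Q = (kk x0 L)\<^sup>2 - (s - L)\<^sup>2"
  have Q: "Q > 0" using Q_pos[OF assms] Q_def by simp
  define r where "r = sqrt Q"
  have r: "r > 0" "r * r = Q" using Q r_def by auto
  define c where "c = sig x0 L / pi"
  have e: "hh1 x0 L s = - c * (s - L) / r" "hh x0 L s = c * r" "hh2 x0 L s = - c * (kk x0 L)\<^sup>2 / (r * r * r)"
    unfolding hh1_def hh_def hh2_def Q_def[symmetric] r_def[symmetric] c_def by (simp_all add: power3_eq_cube)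
  have "2 * (hh1 x0 L s)\<^sup>2 + 2 * hh x0 L s * hh2 x0 L s = 2 * c\<^sup>2 * ((s - L)\<^sup>2 - (kk x0 L)\<^sup>2) / (r * r)"
    unfolding e using r(1) by (intro alg2) simp
  also have "(s - L)\<^sup>2 - (kk x0 L)\<^sup>2 = - (r * r)" using r Q_def by simp
  also have "2 * c\<^sup>2 * - (r * r) / (r * r) = - 2 * c\<^sup>2" using r(1) by simp
  also have "\<dots> = lambda_ex x0 L - 2" unfolding c_def sig_sq lambda_ex_def using x0 xL by (simp add: field_simps)
  finally show ?thesis .
qed

lemma th_ends: "th x0 L 0 = - pi" "th x0 L (2*L) = pi"
proof -
  have k: "L / kk x0 L = sin (sig x0 L)" using sin_sig L_pos unfolding kk_def by simp
  have "aa x0 L 0 = arcsin (- sin (sig x0 L))" unfolding aa_def using k by (simp add: minus_divide_left)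
  also have "\<dots> = - sig x0 L" using sig_bounds arcsin_sin[of "- sig x0 L"] by simp
  finally show "th x0 L 0 = - pi" unfolding th_def using sig_ne by simp
  have "aa x0 L (2*L) = arcsin (sin (sig x0 L))" unfolding aa_def using k by simp
  also have "\<dots> = sig x0 L" using sig_bounds arcsin_sin[of "sig x0 L"] by simp
  finally show "th x0 L (2*L) = pi" unfolding th_def using sig_ne by simp
qed

end

definition Kpp :: "real \<Rightarrow> real \<Rightarrow> real \<Rightarrow> real \<Rightarrow> real \<Rightarrow> real \<Rightarrow> real" where
  "Kpp a a1 a2 b b1 b2 = 2 * a1\<^sup>2 / b + 2 * a * a2 / b - 4 * a * a1 * b1 / b\<^sup>2 - a\<^sup>2 * b2 / b\<^sup>2 + 2 * a\<^sup>2 * b1\<^sup>2 / b ^ 3"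

lemma main_alg:
  fixes h h1 h2 lam xN xT xsN xsT xssN xssT yN yT ysN ysT yssN yssT :: real
  assumes h: "h \<noteq> 0" and ode: "2 * h1\<^sup>2 + 2 * h * h2 = lam - 2"
  defines "H \<equiv> 1 / h" and "Hp \<equiv> - h1 / h\<^sup>2"
  defines "ph \<equiv> xN" and "ph1 \<equiv> xsN + H * xT" and "ph2 \<equiv> xssN + 2 * H * xsT + Hp * xT - H\<^sup>2 * xN"
      and "ta \<equiv> xT" and "ta1 \<equiv> xsT - H * xN" and "ta2 \<equiv> xssT - 2 * H * xsN - Hp * xN - H\<^sup>2 * xT"
      and "ps \<equiv> yN" and "ps1 \<equiv> ysN + H * yT" and "ps2 \<equiv> yssN + 2 * H * ysT + Hp * yT - H\<^sup>2 * yN"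
      and "pt \<equiv> yT" and "pt1 \<equiv> ysT - H * yN"
  shows "Kpp 1 (2 * xsT) (2 * (xsN\<^sup>2 + xsT\<^sup>2) + 2 * ysT) H (H * xsT - xssN) (H * ysT + 2 * (xsN * xssT - xsT * xssN) - yssN)
    = (2 * H * ph\<^sup>2 - 2 * ph1\<^sup>2 / H + 2 * ph2\<^sup>2 / H ^ 3) + lam * (ps + H * ta\<^sup>2 + 2 * ph * ta1)
      + (2 * (ta1\<^sup>2 * h + ta * ta2 * h + ta * ta1 * h1) - 2 * (2 * ta * ta1 * h1 + ta\<^sup>2 * h2)
         - 2 * (ph2 * ta1 * h\<^sup>2 + ph1 * ta2 * h\<^sup>2 + 2 * ph1 * ta1 * h * h1)
         + 4 * (ph2 * ta * h * h1 + ph1 * ta1 * h * h1 + ph1 * ta * h1\<^sup>2 + ph1 * ta * h * h2)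
         + 2 * (1 - lam) * (ph1 * ta + ph * ta1) + 2 * (ph1\<^sup>2 * h + ph * ph2 * h + ph * ph1 * h1))
      + (pt1 * h + pt * h1 + ps2 * h\<^sup>2 + 2 * ps1 * h * h1 - 2 * (ps1 * h * h1 + ps * h1\<^sup>2 + ps * h * h2))"
proof -
  have lam: "lam = 2 * h1\<^sup>2 + 2 * h * h2 + 2" using ode by simp
  show ?thesis
    unfolding Kpp_def H_def Hp_def ph_def ph1_def ph2_def ta_def ta1_def ta2_def ps_def ps1_def ps2_def pt_def pt1_def lam
    using h by (simp add: field_simps power2_eq_square power3_eq_cube)
qed


lemma dv_eqon:
  fixes f F :: "real \<Rightarrow> 'a::euclidean_space"
  assumes "a < b" "x \<in> {a..b}" "\<And>y. y \<in> {a..b} \<Longrightarrow> f y = F y"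
    "(F has_vector_derivative F') (at x within {a..b})"
  shows "dv {a..b} f x = F'"
proof -
  have "(f has_vector_derivative F') (at x within {a..b})"
    by (rule has_vector_derivative_transform_within[OF assms(4), of 1]) (use assms in auto)
  then show ?thesis unfolding dv_def using vector_derivative_within_closed_interval assms(1,2) by blast
qed

definition cr :: "real \<times> real \<Rightarrow> real \<times> real \<Rightarrow> real" where
  "cr p q = fst p * snd q - snd p * fst q"
definition ip :: "real \<times> real \<Rightarrow> real \<times> real \<Rightarrow> real" where
  "ip p q = fst p * fst q + snd p * snd q"

lemma inner_ip: "inner p q = ip p q"
  by (cases p, cases q) (simp add: ip_def inner_Pair)

lemma inner_perp: "inner p (perp q) = cr p q"
  by (cases p, cases q) (simp add: cr_def perp_def inner_Pair)

lemma norm_ip: "norm p = sqrt (ip p p)"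
  by (cases p) (simp add: ip_def norm_Pair power2_eq_square)

lemma vd_fst: "(f has_vector_derivative f') F \<Longrightarrow> ((\<lambda>x. fst (f x)) has_real_derivative fst f') F"
  unfolding has_vector_derivative_def has_field_derivative_def
  by (drule has_derivative_fst) (erule has_derivative_eq_rhs, simp add: fun_eq_iff mult.commute)

lemma vd_snd: "(f has_vector_derivative f') F \<Longrightarrow> ((\<lambda>x. snd (f x)) has_real_derivative snd f') F"
  unfolding has_vector_derivative_def has_field_derivative_def
  by (drule has_derivative_snd) (erule has_derivative_eq_rhs, simp add: fun_eq_iff mult.commute)

lemma cr_deriv:
  assumes "(P has_vector_derivative P') (at x within S)" "(Q has_vector_derivative Q') (at x within S)"
  shows "((\<lambda>x. cr (P x) (Q x)) has_real_derivative cr P' (Q x) + cr (P x) Q') (at x within S)"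
proof -
  note d = vd_fst[OF assms(1)] vd_snd[OF assms(1)] vd_fst[OF assms(2)] vd_snd[OF assms(2)]
  have "((\<lambda>x. fst (P x) * snd (Q x) - snd (P x) * fst (Q x)) has_real_derivative
     (fst (P x) * snd Q' + fst P' * snd (Q x)) - (snd (P x) * fst Q' + snd P' * fst (Q x))) (at x within S)"
    by (intro DERIV_diff DERIV_mult' d)
  then show ?thesis unfolding cr_def by (simp add: algebra_simps)
qed

lemma ip_deriv:
  assumes "(P has_vector_derivative P') (at x within S)" "(Q has_vector_derivative Q') (at x within S)"
  shows "((\<lambda>x. ip (P x) (Q x)) has_real_derivative ip P' (Q x) + ip (P x) Q') (at x within S)"
proof -
  note d = vd_fst[OF assms(1)] vd_snd[OF assms(1)] vd_fst[OF assms(2)] vd_snd[OF assms(2)]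
  have "((\<lambda>x. fst (P x) * fst (Q x) + snd (P x) * snd (Q x)) has_real_derivative
     (fst (P x) * fst Q' + fst P' * fst (Q x)) + (snd (P x) * snd Q' + snd P' * snd (Q x))) (at x within S)"
    by (intro DERIV_add DERIV_mult' d)
  then show ?thesis unfolding ip_def by (simp add: algebra_simps)
qed

definition K0 :: "real \<Rightarrow> real \<Rightarrow> real" where "K0 a b = a\<^sup>2 / b"
definition Kp :: "real \<Rightarrow> real \<Rightarrow> real \<Rightarrow> real \<Rightarrow> real" where
  "Kp a a1 b b1 = 2 * a * a1 / b - a\<^sup>2 * b1 / b\<^sup>2"

lemma K0_deriv:
  assumes "(fa has_real_derivative da) (at x within S)" "(fb has_real_derivative db) (at x within S)" "fb x \<noteq> 0"
  shows "((\<lambda>x. K0 (fa x) (fb x)) has_real_derivative Kp (fa x) da (fb x) db) (at x within S)"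
proof -
  have "((\<lambda>x. (fa x)\<^sup>2 / fb x) has_real_derivative
     ((of_nat 2 * (da * fa x ^ (2 - Suc 0))) * fb x - (fa x)\<^sup>2 * db) / (fb x * fb x)) (at x within S)"
    by (intro DERIV_divide DERIV_power assms)
  moreover have "((of_nat 2 * (da * fa x ^ (2 - Suc 0))) * fb x - (fa x)\<^sup>2 * db) / (fb x * fb x) = Kp (fa x) da (fb x) db"
    unfolding Kp_def using assms(3) by (simp add: field_simps power2_eq_square)
  ultimately show ?thesis unfolding K0_def by simp
qed

lemma Kp_deriv:
  assumes "(fa has_real_derivative fa1 x) (at x within S)" "(fa1 has_real_derivative da1) (at x within S)"
    "(fb has_real_derivative fb1 x) (at x within S)" "(fb1 has_real_derivative db1) (at x within S)" "fb x \<noteq> 0"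
  shows "((\<lambda>x. Kp (fa x) (fa1 x) (fb x) (fb1 x)) has_real_derivative Kpp (fa x) (fa1 x) da1 (fb x) (fb1 x) db1) (at x within S)"
proof -
  have "((\<lambda>x. 2 * fa x * fa1 x / fb x - (fa x)\<^sup>2 * fb1 x / (fb x)\<^sup>2) has_real_derivative
     ((2 * fa x * da1 + 2 * fa1 x * fa1 x) * fb x - 2 * fa x * fa1 x * fb1 x) / (fb x * fb x)
     - (((fa x)\<^sup>2 * db1 + (of_nat 2 * (fa1 x * fa x ^ (2 - Suc 0))) * fb1 x) * (fb x)\<^sup>2 - (fa x)\<^sup>2 * fb1 x * (of_nat 2 * (fb1 x * fb x ^ (2 - Suc 0)))) / ((fb x)\<^sup>2 * (fb x)\<^sup>2)) (at x within S)"
    using assms(5)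
    by (intro DERIV_diff DERIV_divide DERIV_mult' DERIV_cmult DERIV_power assms(1-4)) auto
  moreover have "((2 * fa x * da1 + 2 * fa1 x * fa1 x) * fb x - 2 * fa x * fa1 x * fb1 x) / (fb x * fb x)
     - (((fa x)\<^sup>2 * db1 + (of_nat 2 * (fa1 x * fa x ^ (2 - Suc 0))) * fb1 x) * (fb x)\<^sup>2 - (fa x)\<^sup>2 * fb1 x * (of_nat 2 * (fb1 x * fb x ^ (2 - Suc 0)))) / ((fb x)\<^sup>2 * (fb x)\<^sup>2)
     = Kpp (fa x) (fa1 x) da1 (fb x) (fb1 x) db1"
    unfolding Kpp_def using assms(5) by (simp add: field_simps power2_eq_square power3_eq_cube)
  ultimately show ?thesis unfolding Kp_def by simp
qed


lemma sms: "smooth_open U f \<Longrightarrow> smooth_open U (Ds f)" by (rule sm_D(2))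
lemma smt: "smooth_open U f \<Longrightarrow> smooth_open U (Dt f)" by (rule sm_D(3))

definition al where "al g s t = ip (Ds g (s,t)) (Ds g (s,t))"
definition al1 where "al1 g s t = 2 * ip (Ds g (s,t)) (Dt (Ds g) (s,t))"
definition al2 where "al2 g s t = 2 * (ip (Dt (Ds g) (s,t)) (Dt (Ds g) (s,t)) + ip (Ds g (s,t)) (Dt (Dt (Ds g)) (s,t)))"
definition be where "be g s t = cr (Ds g (s,t)) (Ds (Ds g) (s,t))"
definition be1 where "be1 g s t = cr (Dt (Ds g) (s,t)) (Ds (Ds g) (s,t)) + cr (Ds g (s,t)) (Dt (Ds (Ds g)) (s,t))"
definition be2 where "be2 g s t = cr (Dt (Dt (Ds g)) (s,t)) (Ds (Ds g) (s,t)) + 2 * cr (Dt (Ds g) (s,t)) (Dt (Ds (Ds g)) (s,t))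
   + cr (Ds g (s,t)) (Dt (Dt (Ds (Ds g))) (s,t))"
definition Kf where "Kf g s t = K0 (al g s t) (be g s t)"
definition Kpf where "Kpf g s t = Kp (al g s t) (al1 g s t) (be g s t) (be1 g s t)"
definition Kppf where "Kppf g s t = Kpp (al g s t) (al1 g s t) (al2 g s t) (be g s t) (be1 g s t) (be2 g s t)"

lemma ip_comm: "ip a b = ip b a" by (simp add: ip_def mult.commute)

lemma al_deriv: "smooth_open U g \<Longrightarrow> open U \<Longrightarrow> (s,t) \<in> U \<Longrightarrow>
   ((\<lambda>t. al g s t) has_real_derivative al1 g s t) (at t within S)"
proof -
  assume a: "smooth_open U g" "open U" "(s,t) \<in> U"
  have d: "((\<lambda>t. Ds g (s,t)) has_vector_derivative Dt (Ds g) (s,t)) (at t within S)"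
    using sm_t[OF sm_D(2)[OF a(1)] a(2,3)] .
  show ?thesis using ip_deriv[OF d d] unfolding al_def al1_def by (simp add: ip_comm)
qed

lemma al1_deriv: "smooth_open U g \<Longrightarrow> open U \<Longrightarrow> (s,t) \<in> U \<Longrightarrow>
   ((\<lambda>t. al1 g s t) has_real_derivative al2 g s t) (at t within S)"
proof -
  assume a: "smooth_open U g" "open U" "(s,t) \<in> U"
  have s1: "smooth_open U (Ds g)" "smooth_open U (Dt (Ds g))" using sm_D a(1) by blast+
  have d: "((\<lambda>t. Ds g (s,t)) has_vector_derivative Dt (Ds g) (s,t)) (at t within S)"
    using sm_t[OF s1(1) a(2,3)] .
  have d2: "((\<lambda>t. Dt (Ds g) (s,t)) has_vector_derivative Dt (Dt (Ds g)) (s,t)) (at t within S)"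
    using sm_t[OF s1(2) a(2,3)] .
  show ?thesis using DERIV_cmult[OF ip_deriv[OF d d2], of 2] unfolding al1_def al2_def by (simp add: ip_comm)
qed

lemma be_deriv: "smooth_open U g \<Longrightarrow> open U \<Longrightarrow> (s,t) \<in> U \<Longrightarrow>
   ((\<lambda>t. be g s t) has_real_derivative be1 g s t) (at t within S)"
proof -
  assume a: "smooth_open U g" "open U" "(s,t) \<in> U"
  have s1: "smooth_open U (Ds g)" "smooth_open U (Ds (Ds g))" using sm_D a(1) by blast+
  have d: "((\<lambda>t. Ds g (s,t)) has_vector_derivative Dt (Ds g) (s,t)) (at t within S)"
    using sm_t[OF s1(1) a(2,3)] .
  have d2: "((\<lambda>t. Ds (Ds g) (s,t)) has_vector_derivative Dt (Ds (Ds g)) (s,t)) (at t within S)"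
    using sm_t[OF s1(2) a(2,3)] .
  show ?thesis using cr_deriv[OF d d2] unfolding be_def be1_def by simp
qed

lemma be1_deriv: "smooth_open U g \<Longrightarrow> open U \<Longrightarrow> (s,t) \<in> U \<Longrightarrow>
   ((\<lambda>t. be1 g s t) has_real_derivative be2 g s t) (at t within S)"
proof -
  assume a: "smooth_open U g" "open U" "(s,t) \<in> U"
  note s1 = sms[OF a(1)] smt[OF sms[OF a(1)]] sms[OF sms[OF a(1)]] smt[OF sms[OF sms[OF a(1)]]]
  have "((\<lambda>t. cr (Dt (Ds g) (s,t)) (Ds (Ds g) (s,t)) + cr (Ds g (s,t)) (Dt (Ds (Ds g)) (s,t))) has_real_derivative
     (cr (Dt (Dt (Ds g)) (s,t)) (Ds (Ds g) (s,t)) + cr (Dt (Ds g) (s,t)) (Dt (Ds (Ds g)) (s,t)))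
   + (cr (Dt (Ds g) (s,t)) (Dt (Ds (Ds g)) (s,t)) + cr (Ds g (s,t)) (Dt (Dt (Ds (Ds g))) (s,t)))) (at t within S)"
    by (intro DERIV_add cr_deriv sm_t[OF _ a(2,3)] s1 a(1))
  then show ?thesis unfolding be1_def be2_def by (simp add: algebra_simps)
qed

lemma Kf_deriv: "smooth_open U g \<Longrightarrow> open U \<Longrightarrow> (s,t) \<in> U \<Longrightarrow> be g s t \<noteq> 0 \<Longrightarrow>
   ((\<lambda>t. Kf g s t) has_real_derivative Kpf g s t) (at t within S)"
  unfolding Kf_def Kpf_def by (intro K0_deriv al_deriv be_deriv)

lemma Kpf_deriv: "smooth_open U g \<Longrightarrow> open U \<Longrightarrow> (s,t) \<in> U \<Longrightarrow> be g s t \<noteq> 0 \<Longrightarrow>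
   ((\<lambda>t. Kpf g s t) has_real_derivative Kppf g s t) (at t within S)"
  unfolding Kpf_def Kppf_def by (intro Kp_deriv al_deriv be_deriv al1_deriv be1_deriv)

lemma cont_sw:
  fixes F :: "real\<times>real \<Rightarrow> real\<times>real"
  assumes "smooth_open U F" "open U" "A \<times> B \<subseteq> U"
  shows "continuous_on (B \<times> A) (\<lambda>x. F (snd x, fst x))"
  by (rule continuous_on_compose2[OF sm_cont[OF assms(1,2)]]) (use assms(3) in \<open>auto intro!: continuous_intros\<close>)

lemma cont_ip: "continuous_on S P \<Longrightarrow> continuous_on S Q \<Longrightarrow> continuous_on S (\<lambda>x. ip (P x) (Q x))"
  unfolding ip_def by (auto intro!: continuous_intros)
lemma cont_cr: "continuous_on S P \<Longrightarrow> continuous_on S Q \<Longrightarrow> continuous_on S (\<lambda>x. cr (P x) (Q x))"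
  unfolding cr_def by (auto intro!: continuous_intros)
lemma cont_K0: "continuous_on S fa \<Longrightarrow> continuous_on S fb \<Longrightarrow> (\<And>x. x \<in> S \<Longrightarrow> fb x \<noteq> 0) \<Longrightarrow>
  continuous_on S (\<lambda>x. K0 (fa x) (fb x))"
proof -
  assume a: "continuous_on S fa" "continuous_on S fb" "\<And>x. x \<in> S \<Longrightarrow> fb x \<noteq> 0"
  have n: "\<forall>x\<in>S. fb x \<noteq> 0" using a(3) by auto
  show ?thesis unfolding K0_def
    by (intro continuous_on_divide continuous_on_power a(1-2) n)
qed
lemma cont_Kp: "continuous_on S fa \<Longrightarrow> continuous_on S fa1 \<Longrightarrow> continuous_on S fb \<Longrightarrow> continuous_on S fb1 \<Longrightarrow>
  (\<And>x. x \<in> S \<Longrightarrow> fb x \<noteq> 0) \<Longrightarrow>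
  continuous_on S (\<lambda>x. Kp (fa x) (fa1 x) (fb x) (fb1 x))"
proof -
  assume a: "continuous_on S fa" "continuous_on S fa1" "continuous_on S fb" "continuous_on S fb1"
    "\<And>x. x \<in> S \<Longrightarrow> fb x \<noteq> 0"
  have n: "\<forall>x\<in>S. fb x \<noteq> 0" "\<forall>x\<in>S. (fb x)\<^sup>2 \<noteq> 0" using a(5) by auto
  show ?thesis unfolding Kp_def
    by (intro continuous_on_add continuous_on_diff continuous_on_mult continuous_on_divide continuous_on_power
       continuous_on_const a(1-4) n)
qed
lemma cont_Kpp: "continuous_on S fa \<Longrightarrow> continuous_on S fa1 \<Longrightarrow> continuous_on S fa2 \<Longrightarrow> continuous_on S fb \<Longrightarrow>
  continuous_on S fb1 \<Longrightarrow> continuous_on S fb2 \<Longrightarrow> (\<And>x. x \<in> S \<Longrightarrow> fb x \<noteq> 0) \<Longrightarrow>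
  continuous_on S (\<lambda>x. Kpp (fa x) (fa1 x) (fa2 x) (fb x) (fb1 x) (fb2 x))"
proof -
  assume a: "continuous_on S fa" "continuous_on S fa1" "continuous_on S fa2" "continuous_on S fb"
    "continuous_on S fb1" "continuous_on S fb2" "\<And>x. x \<in> S \<Longrightarrow> fb x \<noteq> 0"
  have n: "\<forall>x\<in>S. fb x \<noteq> 0" "\<forall>x\<in>S. (fb x)\<^sup>2 \<noteq> 0" "\<forall>x\<in>S. fb x ^ 3 \<noteq> 0" using a(7) by auto
  show ?thesis unfolding Kpp_def
    by (intro continuous_on_add continuous_on_diff continuous_on_mult continuous_on_divide continuous_on_power
       continuous_on_const a(1-6) n)
qed

lemma cont_K:
  assumes sm: "smooth_open U g" and U: "open U" and sub: "A \<times> B \<subseteq> U"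
    and nz: "\<And>s t. s \<in> A \<Longrightarrow> t \<in> B \<Longrightarrow> be g s t \<noteq> 0"
  shows "continuous_on (B \<times> A) (\<lambda>x. Kf g (snd x) (fst x))"
    "continuous_on (B \<times> A) (\<lambda>x. Kpf g (snd x) (fst x))"
    "continuous_on (B \<times> A) (\<lambda>x. Kppf g (snd x) (fst x))"
proof -
  note s = sms[OF sm] smt[OF sms[OF sm]] sms[OF sms[OF sm]] smt[OF sms[OF sms[OF sm]]]
     smt[OF smt[OF sms[OF sm]]] smt[OF smt[OF sms[OF sms[OF sm]]]]
  note c = cont_sw[OF s(1) U sub] cont_sw[OF s(2) U sub] cont_sw[OF s(3) U sub] cont_sw[OF s(4) U sub]
     cont_sw[OF s(5) U sub] cont_sw[OF s(6) U sub]
  have nz': "\<And>x. x \<in> B \<times> A \<Longrightarrow> be g (snd x) (fst x) \<noteq> 0" using nz by auto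
  have cal: "continuous_on (B \<times> A) (\<lambda>x. al g (snd x) (fst x))"
    "continuous_on (B \<times> A) (\<lambda>x. al1 g (snd x) (fst x))"
    "continuous_on (B \<times> A) (\<lambda>x. al2 g (snd x) (fst x))"
    "continuous_on (B \<times> A) (\<lambda>x. be g (snd x) (fst x))"
    "continuous_on (B \<times> A) (\<lambda>x. be1 g (snd x) (fst x))"
    "continuous_on (B \<times> A) (\<lambda>x. be2 g (snd x) (fst x))"
    unfolding al_def al1_def al2_def be_def be1_def be2_def
    by (rule cont_ip cont_cr c continuous_on_add continuous_on_mult_left)+
  show "continuous_on (B \<times> A) (\<lambda>x. Kf g (snd x) (fst x))"
    unfolding Kf_def by (rule cont_K0[OF cal(1) cal(4) nz'])
  show "continuous_on (B \<times> A) (\<lambda>x. Kpf g (snd x) (fst x))"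
    unfolding Kpf_def by (rule cont_Kp[OF cal(1,2,4,5) nz'])
  show "continuous_on (B \<times> A) (\<lambda>x. Kppf g (snd x) (fst x))"
    unfolding Kppf_def by (rule cont_Kpp[OF cal nz'])
qed


lemma ip_nonneg: "0 \<le> ip p p" by (simp add: ip_def)

lemma curv_gamma_eqs:
  assumes x0: "0 < x0" and xL: "3 * x0 < L" and s: "s \<in> {0..2*L}"
  shows "dv {0..2*L} (gamma_ex x0 L) s = Tex x0 L s"
    "dv {0..2*L} (dv {0..2*L} (gamma_ex x0 L)) s = (- HH x0 L s) *\<^sub>R Nex x0 L s"
    "curv L (gamma_ex x0 L) s = HH x0 L s"
    "normal L (gamma_ex x0 L) s = Nex x0 L s"
proof -
  have L: "0 < 2 * L" using L_pos[OF x0 xL] by simp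
  have O: "\<And>y. y \<in> {0..2*L} \<Longrightarrow> y \<in> Oset x0 L" using I_sub_OO[OF x0 xL] by blast
  have d1: "\<And>y. y \<in> {0..2*L} \<Longrightarrow> dv {0..2*L} (gamma_ex x0 L) y = Tex x0 L y"
    by (rule dv_eqon[OF L], assumption, rule refl, rule has_vector_derivative_at_within, rule gamma_deriv[OF x0 xL O])
  show t: "dv {0..2*L} (gamma_ex x0 L) s = Tex x0 L s" using d1 s .
  show t2: "dv {0..2*L} (dv {0..2*L} (gamma_ex x0 L)) s = (- HH x0 L s) *\<^sub>R Nex x0 L s"
    by (rule dv_eqon[OF L s d1], assumption, rule has_vector_derivative_at_within, rule Tex_deriv[OF x0 xL O[OF s]])
  have nT: "norm (Tex x0 L s) = 1" unfolding Tex_def by (simp add: norm_Pair)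
  show "curv L (gamma_ex x0 L) s = HH x0 L s"
    unfolding curv_def t t2 nT by (simp add: Tex_def Nex_def perp_def inner_Pair power2_eq_square algebra_simps)
      (simp add: distrib_left[symmetric])
  show "normal L (gamma_ex x0 L) s = Nex x0 L s"
    unfolding normal_def t nT by (simp add: Tex_def Nex_def perp_def)
qed


locale varctx =
  fixes x0 L ta tb :: real and U :: "(real \<times> real) set" and g :: "real \<times> real \<Rightarrow> real \<times> real"
    and V :: "real \<Rightarrow> real \<Rightarrow> real \<times> real"
  assumes x0: "0 < x0" and xL: "3 * x0 < L"
    and ta: "ta \<le> 0" and tb: "0 \<le> tb" and tab: "ta < tb"
    and U: "open U" and sm: "smooth_open U g" and sub: "{0..2*L} \<times> {ta..tb} \<subseteq> U"
    and Vg: "\<And>s t. s \<in> {0..2*L} \<Longrightarrow> t \<in> {ta..tb} \<Longrightarrow> V s t = g (s,t)"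
    and V0: "\<And>s. s \<in> {0..2*L} \<Longrightarrow> V s 0 = gamma_ex x0 L s"
    and adm: "\<And>t. t \<in> {ta..tb} \<Longrightarrow> admissible x0 L (\<lambda>s. V s t)"
begin

lemma L2: "0 < 2 * L" using L_pos[OF x0 xL] by simp
lemma T0: "0 \<in> {ta..tb}" using ta tb by simp
lemma inU: "s \<in> {0..2*L} \<Longrightarrow> t \<in> {ta..tb} \<Longrightarrow> (s,t) \<in> U" using sub by auto
lemma inO: "s \<in> {0..2*L} \<Longrightarrow> s \<in> Oset x0 L" using I_sub_OO[OF x0 xL] by blast

lemma dvV: assumes "s \<in> {0..2*L}" "t \<in> {ta..tb}"
  shows "dv {0..2*L} (\<lambda>s. V s t) s = Ds g (s,t)"
  by (rule dv_eqon[OF L2 assms(1)]) (use Vg assms(2) in simp, rule sm_s[OF sm U inU[OF assms]])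

lemma dv2V: assumes "s \<in> {0..2*L}" "t \<in> {ta..tb}"
  shows "dv {0..2*L} (dv {0..2*L} (\<lambda>s. V s t)) s = Ds (Ds g) (s,t)"
  by (rule dv_eqon[OF L2 assms(1)]) (use dvV assms(2) in simp, rule sm_s[OF sms[OF sm] U inU[OF assms]])

lemma dvV0: assumes "s \<in> {0..2*L}" shows "dv {0..2*L} (\<lambda>s. V s 0) s = Tex x0 L s"
  by (rule dv_eqon[OF L2 assms(1)]) (use V0 in simp, rule has_vector_derivative_at_within, rule gamma_deriv[OF x0 xL inO[OF assms]])

lemma Gs0: assumes "s \<in> {0..2*L}" shows "Ds g (s,0) = Tex x0 L s"
  using dvV0[OF assms] dvV[OF assms T0] by simp

lemma Gss0: assumes "s \<in> {0..2*L}" shows "Ds (Ds g) (s,0) = (- HH x0 L s) *\<^sub>R Nex x0 L s"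
proof -
  have "dv {0..2*L} (dv {0..2*L} (\<lambda>s. V s 0)) s = (- HH x0 L s) *\<^sub>R Nex x0 L s"
    by (rule dv_eqon[OF L2 assms(1)]) (use dvV0 in simp, rule has_vector_derivative_at_within, rule Tex_deriv[OF x0 xL inO[OF assms]])
  then show ?thesis using dv2V[OF assms T0] by simp
qed

lemma crpos: assumes "s \<in> {0..2*L}" "t \<in> {ta..tb}"
  shows "0 < be g s t" "Ds g (s,t) \<noteq> 0"
proof -
  have a: "admissible x0 L (\<lambda>s. V s t)" using adm assms(2) .
  have nz: "dv {0..2*L} (\<lambda>s. V s t) s \<noteq> 0" and cp: "curv L (\<lambda>s. V s t) s > 0"
    using a assms(1) unfolding admissible_def by auto
  show n: "Ds g (s,t) \<noteq> 0" using nz dvV[OF assms] by simp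
  have "curv L (\<lambda>s. V s t) s = be g s t / norm (Ds g (s,t)) ^ 3"
    unfolding curv_def dvV[OF assms] dv2V[OF assms] be_def inner_perp ..
  then have "0 < be g s t / norm (Ds g (s,t)) ^ 3" using cp by simp
  moreover have "0 < norm (Ds g (s,t)) ^ 3" using n by simp
  ultimately show "0 < be g s t" by (simp add: zero_less_divide_iff)
qed

lemma Fen_eq: assumes "t \<in> {ta..tb}"
  shows "Fen L (\<lambda>s. V s t) = integral {0..2*L} (\<lambda>s. Kf g s t)"
  unfolding Fen_def
proof (rule integral_cong)
  fix s assume s: "s \<in> {0..2*L}"
  have n: "Ds g (s,t) \<noteq> 0" and b: "0 < be g s t" using crpos[OF s assms] by auto
  have c: "curv L (\<lambda>s. V s t) s = be g s t / norm (Ds g (s,t)) ^ 3"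
    unfolding curv_def dvV[OF s assms] dv2V[OF s assms] be_def inner_perp ..
  have ipn: "al g s t = (norm (Ds g (s,t)))\<^sup>2" unfolding al_def norm_ip using ip_nonneg by simp
  have np: "norm (Ds g (s,t)) > 0" using n by simp
  show "norm (dv {0..2*L} (\<lambda>s. V s t) s) / curv L (\<lambda>s. V s t) s = Kf g s t"
    unfolding c dvV[OF s assms] Kf_def K0_def ipn using np b by (simp add: field_simps power2_eq_square power3_eq_cube)
qed

lemma be_nz: "s \<in> {0..2*L} \<Longrightarrow> t \<in> {ta..tb} \<Longrightarrow> be g s t \<noteq> 0"
  using crpos by (metis less_irrefl)

lemma subsw: "{0..2*L} \<times> {ta..tb} \<subseteq> U" using sub .

lemma cont_slice: "continuous_on ({ta..tb} \<times> {0..2*L}) (\<lambda>x. F (snd x) (fst x)) \<Longrightarrow> t \<in> {ta..tb} \<Longrightarrow>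
  continuous_on {0..2*L} (\<lambda>s. F s t)"
proof -
  assume c: "continuous_on ({ta..tb} \<times> {0..2*L}) (\<lambda>x. F (snd x) (fst x))" and t: "t \<in> {ta..tb}"
  have "continuous_on {0..2*L} (\<lambda>s. (\<lambda>x. F (snd x) (fst x)) ((\<lambda>s. (t,s)) s))"
    by (rule continuous_on_compose2[OF c]) (use t in \<open>auto intro!: continuous_intros\<close>)
  then show ?thesis by simp
qed

lemma Fen_deriv: assumes t: "t \<in> {ta..tb}"
  shows "((\<lambda>t. Fen L (\<lambda>s. V s t)) has_real_derivative integral {0..2*L} (\<lambda>s. Kpf g s t)) (at t within {ta..tb})"
proof -
  note cK = cont_K[OF sm U subsw be_nz]
  have "((\<lambda>t. integral (cbox 0 (2*L)) (\<lambda>s. Kf g s t)) has_real_derivative integral (cbox 0 (2*L)) (\<lambda>s. Kpf g s t))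
     (at t within {ta..tb})"
  proof (rule leibniz_rule_field_derivative[where f="\<lambda>t s. Kf g s t" and fx="\<lambda>t s. Kpf g s t"])
    fix x s assume "x \<in> {ta..tb}" "s \<in> cbox 0 (2*L)"
    then show "((\<lambda>x. Kf g s x) has_real_derivative Kpf g s x) (at x within {ta..tb})"
      using Kf_deriv[OF sm U inU be_nz] by simp
  next
    fix x assume "x \<in> {ta..tb}"
    then have "continuous_on {0..2*L} (\<lambda>s. Kf g s x)" using cont_slice[OF cK(1)] by blast
    then show "(\<lambda>s. Kf g s x) integrable_on cbox 0 (2*L)" using integrable_continuous_real by simp
  next
    have "(\<lambda>(x, s). Kpf g s x) = (\<lambda>x. Kpf g (snd x) (fst x))" by auto
    then show "continuous_on ({ta..tb} \<times> cbox 0 (2*L)) (\<lambda>(x, s). Kpf g s x)" using cK(2) by simp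
  qed (use t in auto)
  then have "((\<lambda>t. integral {0..2*L} (\<lambda>s. Kf g s t)) has_real_derivative integral {0..2*L} (\<lambda>s. Kpf g s t))
     (at t within {ta..tb})" by simp
  then show ?thesis
    by (rule has_field_derivative_transform_within[OF _ zero_less_one t]) (use Fen_eq in simp)
qed

lemma f1_deriv:
  "((\<lambda>t. integral {0..2*L} (\<lambda>s. Kpf g s t)) has_real_derivative integral {0..2*L} (\<lambda>s. Kppf g s 0)) (at 0 within {ta..tb})"
proof -
  note cK = cont_K[OF sm U subsw be_nz]
  have "((\<lambda>t. integral (cbox 0 (2*L)) (\<lambda>s. Kpf g s t)) has_real_derivative integral (cbox 0 (2*L)) (\<lambda>s. Kppf g s 0))
     (at 0 within {ta..tb})"
  proof (rule leibniz_rule_field_derivative[where f="\<lambda>t s. Kpf g s t" and fx="\<lambda>t s. Kppf g s t"])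
    fix x s assume "x \<in> {ta..tb}" "s \<in> cbox 0 (2*L)"
    then show "((\<lambda>x. Kpf g s x) has_real_derivative Kppf g s x) (at x within {ta..tb})"
      using Kpf_deriv[OF sm U inU be_nz] by simp
  next
    fix x assume "x \<in> {ta..tb}"
    then have "continuous_on {0..2*L} (\<lambda>s. Kpf g s x)" using cont_slice[OF cK(2)] by blast
    then show "(\<lambda>s. Kpf g s x) integrable_on cbox 0 (2*L)" using integrable_continuous_real by simp
  next
    have "(\<lambda>(x, s). Kppf g s x) = (\<lambda>x. Kppf g (snd x) (fst x))" by auto
    then show "continuous_on ({ta..tb} \<times> cbox 0 (2*L)) (\<lambda>(x, s). Kppf g s x)" using cK(3) by simp
  qed (use T0 in auto)
  then show ?thesis by simp
qed

lemma Kpp0_cont: "continuous_on {0..2*L} (\<lambda>s. Kppf g s 0)"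
  using cont_slice[OF cont_K(3)[OF sm U subsw be_nz] T0] .

lemma sw1: "x \<in> U \<Longrightarrow> Dt (Ds g) x = Ds (Dt g) x"
  using schwarz[OF sm U] by simp
lemma sw2: "x \<in> U \<Longrightarrow> Dt (Ds (Ds g)) x = Ds (Ds (Dt g)) x"
proof -
  assume x: "x \<in> U"
  have "Dt (Ds (Ds g)) x = Ds (Dt (Ds g)) x" using schwarz[OF sms[OF sm] U x] by simp
  also have "\<dots> = Ds (Ds (Dt g)) x" by (rule Ds_cong[OF U x sw1])
  finally show ?thesis .
qed
lemma sw3: "x \<in> U \<Longrightarrow> Dt (Dt (Ds g)) x = Ds (Dt (Dt g)) x"
proof -
  assume x: "x \<in> U"
  have "Dt (Dt (Ds g)) x = Dt (Ds (Dt g)) x" by (rule Dt_cong[OF U x sw1])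
  also have "\<dots> = Ds (Dt (Dt g)) x" using schwarz[OF smt[OF sm] U x] by simp
  finally show ?thesis .
qed
lemma sw4: "x \<in> U \<Longrightarrow> Dt (Dt (Ds (Ds g))) x = Ds (Ds (Dt (Dt g))) x"
proof -
  assume x: "x \<in> U"
  have "Dt (Dt (Ds (Ds g))) x = Dt (Ds (Ds (Dt g))) x" by (rule Dt_cong[OF U x sw2])
  also have "\<dots> = Ds (Dt (Ds (Dt g))) x" using schwarz[OF sms[OF smt[OF sm]] U x] by simp
  also have "\<dots> = Ds (Ds (Dt (Dt g))) x"
    by (rule Ds_cong[OF U x]) (use schwarz[OF smt[OF sm] U] in simp)
  finally show ?thesis .
qed

lemma vel_eq: assumes "s \<in> {0..2*L}" shows "velocity {ta..tb} V s = Dt g (s,0)"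
  unfolding velocity_def
  by (rule dv_eqon[OF tab T0]) (use Vg assms in simp, rule sm_t[OF sm U inU[OF assms T0]])

lemma dvt: assumes "s \<in> {0..2*L}" "y \<in> {ta..tb}" shows "dv {ta..tb} (\<lambda>t. V s t) y = Dt g (s,y)"
  by (rule dv_eqon[OF tab assms(2)]) (use Vg assms in simp, rule sm_t[OF sm U inU[OF assms]])

lemma acc_eq: assumes "s \<in> {0..2*L}" shows "accel {ta..tb} V s = Dt (Dt g) (s,0)"
  unfolding accel_def
  by (rule dv_eqon[OF tab T0]) (use dvt assms in simp, rule sm_t[OF smt[OF sm] U inU[OF assms T0]])

lemma ends_const: assumes "s = 0 \<or> s = 2*L"
  shows "\<And>t. t \<in> {ta..tb} \<Longrightarrow> V s t = V s 0"
  using adm T0 assms unfolding admissible_def by auto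

lemma ends_X: assumes "s = 0 \<or> s = 2*L"
  shows "Dt g (s,0) = 0" "Dt (Dt g) (s,0) = 0"
proof -
  have s: "s \<in> {0..2*L}" using assms L2 by auto
  have z: "\<And>y. y \<in> {ta..tb} \<Longrightarrow> dv {ta..tb} (\<lambda>t. V s t) y = 0"
    by (rule dv_eqon[OF tab, where F="\<lambda>_. V s 0"]) (use ends_const[OF assms] in auto)
  show "Dt g (s,0) = 0" using z[OF T0] dvt[OF s T0] by simp
  have "dv {ta..tb} (dv {ta..tb} (\<lambda>t. V s t)) 0 = 0"
    by (rule dv_eqon[OF tab T0, where F="\<lambda>_. 0"]) (use z in auto)
  then show "Dt (Dt g) (s,0) = 0" using acc_eq[OF s] unfolding accel_def by simp
qed

end


definition cN where "cN x0 L Z s = ip Z (Nex x0 L s)"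
definition cT where "cT x0 L Z s = ip Z (Tex x0 L s)"
definition HHp where "HHp x0 L s = - hh1 x0 L s / (hh x0 L s)\<^sup>2"

definition phi0 where "phi0 x0 L F s = cN x0 L (F (s,0)) s"
definition phi1 where "phi1 x0 L F s = cN x0 L (Ds F (s,0)) s + HH x0 L s * cT x0 L (F (s,0)) s"
definition phi2 where "phi2 x0 L F s = cN x0 L (Ds (Ds F) (s,0)) s + 2 * HH x0 L s * cT x0 L (Ds F (s,0)) s
   + HHp x0 L s * cT x0 L (F (s,0)) s - (HH x0 L s)\<^sup>2 * cN x0 L (F (s,0)) s"
definition tau0 where "tau0 x0 L F s = cT x0 L (F (s,0)) s"
definition tau1 where "tau1 x0 L F s = cT x0 L (Ds F (s,0)) s - HH x0 L s * cN x0 L (F (s,0)) s"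
definition tau2 where "tau2 x0 L F s = cT x0 L (Ds (Ds F) (s,0)) s - 2 * HH x0 L s * cN x0 L (Ds F (s,0)) s
   - HHp x0 L s * cN x0 L (F (s,0)) s - (HH x0 L s)\<^sup>2 * cT x0 L (F (s,0)) s"

lemma ip_scaleR: "ip Z (c *\<^sub>R W) = c * ip Z W" by (simp add: ip_def algebra_simps)
lemma ip_scaleL: "ip (c *\<^sub>R Z) W = c * ip Z W" by (simp add: ip_def algebra_simps)
lemma cr_scaleR: "cr Z (c *\<^sub>R W) = c * cr Z W" by (simp add: cr_def algebra_simps)

lemma TN_facts:
  shows "ip (Tex x0 L s) (Tex x0 L s) = 1" "cN x0 L (Tex x0 L s) s = 0" "cT x0 L (Tex x0 L s) s = 1"
    "cN x0 L (Nex x0 L s) s = 1" "cT x0 L (Nex x0 L s) s = 0"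
    "ip Z W = cN x0 L Z s * cN x0 L W s + cT x0 L Z s * cT x0 L W s"
    "cr Z W = cN x0 L Z s * cT x0 L W s - cT x0 L Z s * cN x0 L W s"
proof -
  define c where "c = cos (th x0 L s)"
  define d where "d = sin (th x0 L s)"
  have cd: "c\<^sup>2 + d\<^sup>2 = 1" unfolding c_def d_def by simp
  have T: "Tex x0 L s = (- c, - d)" and N: "Nex x0 L s = (- d, c)" unfolding Tex_def Nex_def c_def d_def by auto
  show "ip (Tex x0 L s) (Tex x0 L s) = 1" unfolding T ip_def using cd by (simp add: power2_eq_square)
  show "cN x0 L (Tex x0 L s) s = 0" unfolding cN_def T N ip_def by simp
  show "cT x0 L (Tex x0 L s) s = 1" unfolding cT_def T ip_def using cd by (simp add: power2_eq_square)
  show "cN x0 L (Nex x0 L s) s = 1" unfolding cN_def N ip_def using cd by (simp add: power2_eq_square add.commute)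
  show "cT x0 L (Nex x0 L s) s = 0" unfolding cT_def T N ip_def by simp
  obtain z1 z2 where z: "Z = (z1,z2)" by force
  obtain w1 w2 where w: "W = (w1,w2)" by force
  have cd': "c * c = 1 - d * d" using cd by (simp add: power2_eq_square)
  show "ip Z W = cN x0 L Z s * cN x0 L W s + cT x0 L Z s * cT x0 L W s"
    unfolding cN_def cT_def T N z w ip_def using cd' by simp algebra
  show "cr Z W = cN x0 L Z s * cT x0 L W s - cT x0 L Z s * cN x0 L W s"
    unfolding cN_def cT_def T N z w ip_def cr_def using cd' by simp algebra
qed

lemma cN_scale: "cN x0 L (c *\<^sub>R Z) s = c * cN x0 L Z s" unfolding cN_def by (rule ip_scaleL)
lemma cT_scale: "cT x0 L (c *\<^sub>R Z) s = c * cT x0 L Z s" unfolding cT_def by (rule ip_scaleL)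

context varctx
begin

lemma HH_fun: "HH x0 L = (\<lambda>s. 1 / hh x0 L s)" by (rule ext) (simp add: HH_def[OF x0 xL])

lemma HH_deriv: assumes "s \<in> {0..2*L}" shows "(HH x0 L has_real_derivative HHp x0 L s) (at s)"
proof -
  have o: "s \<in> Oset x0 L" using inO assms .
  have "((\<lambda>s. 1 / hh x0 L s) has_real_derivative (0 * hh x0 L s - 1 * hh1 x0 L s) / (hh x0 L s * hh x0 L s)) (at s)"
    by (rule DERIV_divide[OF DERIV_const hh_deriv[OF x0 xL o]]) (use hh_pos[OF x0 xL o] in simp)
  then show ?thesis unfolding HH_fun HHp_def by (simp add: power2_eq_square)
qed

lemma cN_deriv: assumes F: "smooth_open U F" and s: "s \<in> {0..2*L}"
  shows "((\<lambda>s. cN x0 L (F (s,0)) s) has_real_derivative cN x0 L (Ds F (s,0)) s + HH x0 L s * cT x0 L (F (s,0)) s) (at s)"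
proof -
  have "((\<lambda>s. ip (F (s,0)) (Nex x0 L s)) has_real_derivative
        ip (Ds F (s,0)) (Nex x0 L s) + ip (F (s,0)) (HH x0 L s *\<^sub>R Tex x0 L s)) (at s)"
    by (rule ip_deriv[OF sm_s[OF F U inU[OF s T0]] Nex_deriv[OF x0 xL inO[OF s]]])
  then show ?thesis unfolding cN_def cT_def ip_scaleR by simp
qed

lemma cT_deriv: assumes F: "smooth_open U F" and s: "s \<in> {0..2*L}"
  shows "((\<lambda>s. cT x0 L (F (s,0)) s) has_real_derivative cT x0 L (Ds F (s,0)) s - HH x0 L s * cN x0 L (F (s,0)) s) (at s)"
proof -
  have "((\<lambda>s. ip (F (s,0)) (Tex x0 L s)) has_real_derivative
        ip (Ds F (s,0)) (Tex x0 L s) + ip (F (s,0)) ((- HH x0 L s) *\<^sub>R Nex x0 L s)) (at s)"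
    by (rule ip_deriv[OF sm_s[OF F U inU[OF s T0]] Tex_deriv[OF x0 xL inO[OF s]]])
  then show ?thesis unfolding cN_def cT_def ip_scaleR by simp
qed

lemma phi0_deriv: "smooth_open U F \<Longrightarrow> s \<in> {0..2*L} \<Longrightarrow> (phi0 x0 L F has_real_derivative phi1 x0 L F s) (at s)"
  unfolding phi0_def[abs_def] phi1_def by (rule cN_deriv)

lemma tau0_deriv: "smooth_open U F \<Longrightarrow> s \<in> {0..2*L} \<Longrightarrow> (tau0 x0 L F has_real_derivative tau1 x0 L F s) (at s)"
  unfolding tau0_def[abs_def] tau1_def by (rule cT_deriv)

lemma phi1_deriv: assumes F: "smooth_open U F" and s: "s \<in> {0..2*L}"
  shows "(phi1 x0 L F has_real_derivative phi2 x0 L F s) (at s)"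
proof -
  have "((\<lambda>s. cN x0 L (Ds F (s,0)) s + HH x0 L s * cT x0 L (F (s,0)) s) has_real_derivative
     (cN x0 L (Ds (Ds F) (s,0)) s + HH x0 L s * cT x0 L (Ds F (s,0)) s)
     + (HH x0 L s * (cT x0 L (Ds F (s,0)) s - HH x0 L s * cN x0 L (F (s,0)) s) + HHp x0 L s * cT x0 L (F (s,0)) s)) (at s)"
    by (intro DERIV_add DERIV_mult' cN_deriv[OF sms[OF F] s] cT_deriv[OF F s] HH_deriv[OF s])
  then show ?thesis unfolding phi1_def[abs_def] phi2_def by (simp add: algebra_simps power2_eq_square)
qed

lemma tau1_deriv: assumes F: "smooth_open U F" and s: "s \<in> {0..2*L}"
  shows "(tau1 x0 L F has_real_derivative tau2 x0 L F s) (at s)"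
proof -
  have "((\<lambda>s. cT x0 L (Ds F (s,0)) s - HH x0 L s * cN x0 L (F (s,0)) s) has_real_derivative
     (cT x0 L (Ds (Ds F) (s,0)) s - HH x0 L s * cN x0 L (Ds F (s,0)) s)
     - (HH x0 L s * (cN x0 L (Ds F (s,0)) s + HH x0 L s * cT x0 L (F (s,0)) s) + HHp x0 L s * cN x0 L (F (s,0)) s)) (at s)"
    by (intro DERIV_diff DERIV_mult' cN_deriv[OF F s] cT_deriv[OF sms[OF F] s] HH_deriv[OF s])
  then show ?thesis unfolding tau1_def[abs_def] tau2_def by (simp add: algebra_simps power2_eq_square)
qed

end


context varctx
begin

lemma inU0: "s \<in> {0..2*L} \<Longrightarrow> (s,0) \<in> U" using inU T0 by blast

lemma Kpp_at0: assumes s: "s \<in> {0..2*L}"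
  shows "Kppf g s 0 = Kpp 1 (2 * cT x0 L (Ds (Dt g) (s,0)) s)
     (2 * ((cN x0 L (Ds (Dt g) (s,0)) s)\<^sup>2 + (cT x0 L (Ds (Dt g) (s,0)) s)\<^sup>2) + 2 * cT x0 L (Ds (Dt (Dt g)) (s,0)) s)
     (HH x0 L s) (HH x0 L s * cT x0 L (Ds (Dt g) (s,0)) s - cN x0 L (Ds (Ds (Dt g)) (s,0)) s)
     (HH x0 L s * cT x0 L (Ds (Dt (Dt g)) (s,0)) s + 2 * (cN x0 L (Ds (Dt g) (s,0)) s * cT x0 L (Ds (Ds (Dt g)) (s,0)) s
        - cT x0 L (Ds (Dt g) (s,0)) s * cN x0 L (Ds (Ds (Dt g)) (s,0)) s) - cN x0 L (Ds (Ds (Dt (Dt g))) (s,0)) s)"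
proof -
  note u = inU0[OF s]
  note ipg = TN_facts(6)[of _ _ x0 L s] and crg = TN_facts(7)[of _ _ x0 L s]
  have e: "al g s 0 = 1"
    "al1 g s 0 = 2 * cT x0 L (Ds (Dt g) (s,0)) s"
    "al2 g s 0 = 2 * ((cN x0 L (Ds (Dt g) (s,0)) s)\<^sup>2 + (cT x0 L (Ds (Dt g) (s,0)) s)\<^sup>2) + 2 * cT x0 L (Ds (Dt (Dt g)) (s,0)) s"
    "be g s 0 = HH x0 L s"
    "be1 g s 0 = HH x0 L s * cT x0 L (Ds (Dt g) (s,0)) s - cN x0 L (Ds (Ds (Dt g)) (s,0)) s"
    "be2 g s 0 = HH x0 L s * cT x0 L (Ds (Dt (Dt g)) (s,0)) s + 2 * (cN x0 L (Ds (Dt g) (s,0)) s * cT x0 L (Ds (Ds (Dt g)) (s,0)) s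
        - cT x0 L (Ds (Dt g) (s,0)) s * cN x0 L (Ds (Ds (Dt g)) (s,0)) s) - cN x0 L (Ds (Ds (Dt (Dt g))) (s,0)) s"
    unfolding al_def al1_def al2_def be_def be1_def be2_def Gs0[OF s] Gss0[OF s] sw1[OF u] sw2[OF u] sw3[OF u] sw4[OF u]
    by (simp_all only: ipg crg TN_facts(2-5) cN_scale cT_scale)
       (simp_all add: algebra_simps power2_eq_square)
  show ?thesis unfolding Kppf_def e ..
qed

end

definition Aint where "Aint x0 L g s = 2 * HH x0 L s * (phi0 x0 L (Dt g) s)\<^sup>2 - 2 * (phi1 x0 L (Dt g) s)\<^sup>2 / HH x0 L s
   + 2 * (phi2 x0 L (Dt g) s)\<^sup>2 / HH x0 L s ^ 3"
definition Bint where "Bint x0 L g s = phi0 x0 L (Dt (Dt g)) s + HH x0 L s * (tau0 x0 L (Dt g) s)\<^sup>2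
   + 2 * phi0 x0 L (Dt g) s * tau1 x0 L (Dt g) s"
definition Pf where "Pf x0 L g s = (let h = hh x0 L s; h1 = hh1 x0 L s; lam = lambda_ex x0 L;
     ph = phi0 x0 L (Dt g) s; ph1 = phi1 x0 L (Dt g) s; ta = tau0 x0 L (Dt g) s; ta1 = tau1 x0 L (Dt g) s;
     ps = phi0 x0 L (Dt (Dt g)) s; ps1 = phi1 x0 L (Dt (Dt g)) s; pt = tau0 x0 L (Dt (Dt g)) s in
   2 * ta * ta1 * h - 2 * ta\<^sup>2 * h1 - 2 * ph1 * ta1 * h\<^sup>2 + 4 * ph1 * ta * h * h1 + 2 * ph * ta * (1 - lam) + 2 * ph * ph1 * h
   + pt * h + ps1 * h\<^sup>2 - 2 * ps * h * h1)"
definition DPf where "DPf x0 L g s = (let h = hh x0 L s; h1 = hh1 x0 L s; h2 = hh2 x0 L s; lam = lambda_ex x0 L;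
     ph = phi0 x0 L (Dt g) s; ph1 = phi1 x0 L (Dt g) s; ph2 = phi2 x0 L (Dt g) s;
     ta = tau0 x0 L (Dt g) s; ta1 = tau1 x0 L (Dt g) s; ta2 = tau2 x0 L (Dt g) s;
     ps = phi0 x0 L (Dt (Dt g)) s; ps1 = phi1 x0 L (Dt (Dt g)) s; ps2 = phi2 x0 L (Dt (Dt g)) s;
     pt = tau0 x0 L (Dt (Dt g)) s; pt1 = tau1 x0 L (Dt (Dt g)) s in
   (2 * (ta1\<^sup>2 * h + ta * ta2 * h + ta * ta1 * h1) - 2 * (2 * ta * ta1 * h1 + ta\<^sup>2 * h2)
         - 2 * (ph2 * ta1 * h\<^sup>2 + ph1 * ta2 * h\<^sup>2 + 2 * ph1 * ta1 * h * h1)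
         + 4 * (ph2 * ta * h * h1 + ph1 * ta1 * h * h1 + ph1 * ta * h1\<^sup>2 + ph1 * ta * h * h2)
         + 2 * (1 - lam) * (ph1 * ta + ph * ta1) + 2 * (ph1\<^sup>2 * h + ph * ph2 * h + ph * ph1 * h1))
      + (pt1 * h + pt * h1 + ps2 * h\<^sup>2 + 2 * ps1 * h * h1 - 2 * (ps1 * h * h1 + ps * h1\<^sup>2 + ps * h * h2)))"

context varctx
begin

lemma pointwise: assumes s: "s \<in> {0..2*L}"
  shows "Kppf g s 0 = Aint x0 L g s + lambda_ex x0 L * Bint x0 L g s + DPf x0 L g s"
proof -
  have o: "s \<in> Oset x0 L" using inO[OF s] .
  have h: "hh x0 L s \<noteq> 0" using hh_pos[OF x0 xL o] by simp
  note ma = main_alg[OF h hh_ode[OF x0 xL o],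
     where xN = "cN x0 L (Dt g (s,0)) s" and xT = "cT x0 L (Dt g (s,0)) s"
       and xsN = "cN x0 L (Ds (Dt g) (s,0)) s" and xsT = "cT x0 L (Ds (Dt g) (s,0)) s"
       and xssN = "cN x0 L (Ds (Ds (Dt g)) (s,0)) s" and xssT = "cT x0 L (Ds (Ds (Dt g)) (s,0)) s"
       and yN = "cN x0 L (Dt (Dt g) (s,0)) s" and yT = "cT x0 L (Dt (Dt g) (s,0)) s"
       and ysN = "cN x0 L (Ds (Dt (Dt g)) (s,0)) s" and ysT = "cT x0 L (Ds (Dt (Dt g)) (s,0)) s"
       and yssN = "cN x0 L (Ds (Ds (Dt (Dt g))) (s,0)) s"]
  have HHe: "HH x0 L s = 1 / hh x0 L s" using HH_def[OF x0 xL] by simp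
  show ?thesis
    unfolding Kpp_at0[OF s] Aint_def Bint_def DPf_def Let_def phi0_def phi1_def phi2_def tau0_def tau1_def tau2_def
      HHp_def HHe add.assoc[symmetric]
    using ma[unfolded add.assoc[symmetric]] .
qed

lemma cont_deriv_on: "(\<And>s. s \<in> S \<Longrightarrow> (f has_real_derivative f' s) (at s)) \<Longrightarrow> continuous_on S f"
  by (meson DERIV_isCont continuous_at_imp_continuous_on)

lemma Pf_deriv: assumes s: "s \<in> {0..2*L}"
  shows "(Pf x0 L g has_real_derivative DPf x0 L g s) (at s)"
proof -
  have o: "s \<in> Oset x0 L" using inO[OF s] .
  note X = smt[OF sm] and Y = smt[OF smt[OF sm]]
  note d = phi0_deriv[OF X s] phi1_deriv[OF X s] tau0_deriv[OF X s] tau1_deriv[OF X s]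
    phi0_deriv[OF Y s] phi1_deriv[OF Y s] tau0_deriv[OF Y s] hh_deriv[OF x0 xL o] hh1_deriv[OF x0 xL o]
  show ?thesis
    unfolding Pf_def[abs_def] DPf_def Let_def
    apply (rule DERIV_cong)
     apply (rule derivative_eq_intros d refl | simp only:)+
    apply (simp add: algebra_simps power2_eq_square)
    done
qed

end


lemma ip_zero: "ip 0 W = 0" by (simp add: ip_def)

context varctx
begin

lemma Bint_cont: "continuous_on {0..2*L} (Bint x0 L g)"
proof -
  note X = smt[OF sm] and Y = smt[OF smt[OF sm]]
  have c: "continuous_on {0..2*L} (phi0 x0 L (Dt (Dt g)))" "continuous_on {0..2*L} (HH x0 L)"
    "continuous_on {0..2*L} (tau0 x0 L (Dt g))" "continuous_on {0..2*L} (phi0 x0 L (Dt g))"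
    "continuous_on {0..2*L} (tau1 x0 L (Dt g))"
    by (rule cont_deriv_on, erule phi0_deriv[OF Y], rule cont_deriv_on, erule HH_deriv,
        rule cont_deriv_on, erule tau0_deriv[OF X], rule cont_deriv_on, erule phi0_deriv[OF X],
        rule cont_deriv_on, erule tau1_deriv[OF X])
  show ?thesis unfolding Bint_def[abs_def]
    by (intro continuous_on_add continuous_on_mult continuous_on_power continuous_on_const c)
qed

lemma DP_integral: "(DPf x0 L g has_integral (Pf x0 L g (2*L) - Pf x0 L g 0)) {0..2*L}"
proof (rule fundamental_theorem_of_calculus)
  show "0 \<le> 2 * L" using L2 by simp
  fix s assume s: "s \<in> {0..2*L}"
  show "(Pf x0 L g has_vector_derivative DPf x0 L g s) (at s within {0..2*L})"
    using Pf_deriv[OF s] by (simp add: has_real_derivative_iff_has_vector_derivative[symmetric] has_field_derivative_at_within)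
qed

lemma integral_formula:
  "integral {0..2*L} (\<lambda>s. Kppf g s 0) = integral {0..2*L} (Aint x0 L g) + lambda_ex x0 L * integral {0..2*L} (Bint x0 L g)
     + (Pf x0 L g (2*L) - Pf x0 L g 0)"
proof -
  define IK where "IK = integral {0..2*L} (\<lambda>s. Kppf g s 0)"
  define IB where "IB = integral {0..2*L} (Bint x0 L g)"
  have hK: "((\<lambda>s. Kppf g s 0) has_integral IK) {0..2*L}"
    unfolding IK_def using integrable_continuous_real[OF Kpp0_cont] by (simp add: integrable_integral)
  have hB: "(Bint x0 L g has_integral IB) {0..2*L}"
    unfolding IB_def using integrable_continuous_real[OF Bint_cont] by (simp add: integrable_integral)
  have h1: "((\<lambda>s. Kppf g s 0 - lambda_ex x0 L * Bint x0 L g s - DPf x0 L g s) has_integral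
      (IK - lambda_ex x0 L * IB - (Pf x0 L g (2*L) - Pf x0 L g 0))) {0..2*L}"
    by (intro has_integral_diff hK has_integral_mult_right hB DP_integral)
  have h2: "(Aint x0 L g has_integral (IK - lambda_ex x0 L * IB - (Pf x0 L g (2*L) - Pf x0 L g 0))) {0..2*L}"
    by (rule has_integral_eq[OF _ h1]) (simp add: pointwise)
  then have "integral {0..2*L} (Aint x0 L g) = IK - lambda_ex x0 L * IB - (Pf x0 L g (2*L) - Pf x0 L g 0)"
    by (rule integral_unique)
  then show ?thesis unfolding IK_def[symmetric] IB_def[symmetric] by simp
qed

lemma P_end: assumes "s = 0 \<or> s = 2*L"
  shows "Pf x0 L g s = (phi1 x0 L (Dt (Dt g)) s - 2 * phi1 x0 L (Dt g) s * tau1 x0 L (Dt g) s) * (hh x0 L s)\<^sup>2"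
proof -
  have z: "phi0 x0 L (Dt g) s = 0" "tau0 x0 L (Dt g) s = 0" "phi0 x0 L (Dt (Dt g)) s = 0" "tau0 x0 L (Dt (Dt g)) s = 0"
    unfolding phi0_def tau0_def cN_def cT_def ends_X[OF assms] by (simp_all add: ip_zero)
  show ?thesis unfolding Pf_def Let_def z by (simp add: algebra_simps)
qed

end


lemma cN_add: "cN x0 L (Z + W) s = cN x0 L Z s + cN x0 L W s" unfolding cN_def ip_def by (simp add: algebra_simps)
lemma cT_add: "cT x0 L (Z + W) s = cT x0 L Z s + cT x0 L W s" unfolding cT_def ip_def by (simp add: algebra_simps)

lemma rd_within: "(f has_real_derivative f') (at s) \<Longrightarrow> (f has_vector_derivative f') (at s within S)"
  by (simp add: has_real_derivative_iff_has_vector_derivative[symmetric] has_field_derivative_at_within)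

lemma min_second:
  fixes m m1 :: "real \<Rightarrow> real"
  assumes d: "0 < d" and dm: "\<And>t. \<bar>t\<bar> < d \<Longrightarrow> (m has_real_derivative m1 t) (at t)"
    and dm1: "(m1 has_real_derivative c) (at 0)"
    and mn: "\<And>t. \<bar>t\<bar> < d \<Longrightarrow> m 0 \<le> m t"
  shows "m1 0 = 0" "0 \<le> c"
proof -
  show m10: "m1 0 = 0"
    by (rule DERIV_local_min[OF dm[of 0] d]) (use d mn in auto)
  show "0 \<le> c"
  proof (rule ccontr)
    assume "\<not> 0 \<le> c" then have c: "c < 0" by simp
    obtain e where e: "e > 0" "\<forall>h>0. h < e \<longrightarrow> m1 0 > m1 (0 + h)"
      using DERIV_neg_dec_right[OF dm1 c] by blast
    define b where "b = min e d / 2"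
    have b: "0 < b" "b < e" "b < d" using e d by (auto simp: b_def)
    have "\<forall>x. 0 \<le> x \<and> x \<le> b \<longrightarrow> (m has_real_derivative m1 x) (at x)" using dm b by auto
    then obtain z where z: "0 < z" "z < b" "m b - m 0 = (b - 0) * m1 z"
      using MVT2[of 0 b m m1] b by blast
    have "m1 z < 0" using e(2) z b m10 by force
    then have "b * m1 z < 0" using b(1) by (simp add: mult_pos_neg)
    then have "m b < m 0" using z(3) by simp
    moreover have "m 0 \<le> m b" using mn b by simp
    ultimately show False by simp
  qed
qed

context varctx
begin

lemma y0_nonneg: assumes t: "t \<in> {ta..tb}" shows "0 \<le> snd (Ds g (0,t))"
proof (rule ccontr)
  assume "\<not> 0 \<le> snd (Ds g (0,t))"
  then have neg: "snd (Ds g (0,t)) < 0" by simp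
  have d: "((\<lambda>s. snd (g (s,t))) has_real_derivative snd (Ds g (0,t))) (at 0)"
    using vd_snd[OF sm_s[OF sm U inU[OF _ t]]] L2 by simp
  obtain e where e: "e > 0" "\<forall>h>0. h < e \<longrightarrow> snd (g (0,t)) > snd (g (0 + h, t))"
    using DERIV_neg_dec_right[OF d neg] by blast
  define h where "h = min e (2*L) / 2"
  have h: "0 < h" "h < e" "h < 2*L" using e L2 by (auto simp: h_def)
  have a: "admissible x0 L (\<lambda>s. V s t)" using adm t .
  have "snd (V h t) > 0" using a h unfolding admissible_def by auto
  moreover have "V h t = g (h,t)" using Vg[OF _ t] h by simp
  moreover have "g (0,t) = V 0 t" using Vg[OF _ t] L2 by simp
  moreover have "snd (V 0 t) = 0" using a unfolding admissible_def by simp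
  ultimately show False using e(2) h by force
qed

lemma y2L_nonpos: assumes t: "t \<in> {ta..tb}" shows "snd (Ds g (2*L,t)) \<le> 0"
proof (rule ccontr)
  assume "\<not> snd (Ds g (2*L,t)) \<le> 0"
  then have pos: "0 < snd (Ds g (2*L,t))" by simp
  have d: "((\<lambda>s. snd (g (s,t))) has_real_derivative snd (Ds g (2*L,t))) (at (2*L))"
    using vd_snd[OF sm_s[OF sm U inU[OF _ t]]] L2 by simp
  obtain e where e: "e > 0" "\<forall>h>0. h < e \<longrightarrow> snd (g (2*L - h, t)) < snd (g (2*L,t))"
    using DERIV_pos_inc_left[OF d pos] by blast
  define h where "h = min e (2*L) / 2"
  have h: "0 < h" "h < e" "h < 2*L" using e L2 by (auto simp: h_def)
  have a: "admissible x0 L (\<lambda>s. V s t)" using adm t .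
  have "snd (V (2*L - h) t) > 0" using a h unfolding admissible_def by auto
  moreover have "V (2*L - h) t = g (2*L - h,t)" using Vg[OF _ t] h by simp
  moreover have "g (2*L,t) = V (2*L) t" using Vg[OF _ t] L2 by simp
  moreover have "snd (V (2*L) t) = 0" using a unfolding admissible_def by simp
  ultimately show False using e(2) h by force
qed

lemma end_signs: assumes ta0: "ta < 0" and tb0: "0 < tb"
  shows "snd (Ds (Dt g) (0,0)) = 0" "0 \<le> snd (Ds (Dt (Dt g)) (0,0))"
    "snd (Ds (Dt g) (2*L,0)) = 0" "snd (Ds (Dt (Dt g)) (2*L,0)) \<le> 0"
proof -
  define d where "d = min (- ta) tb"
  have d: "0 < d" using ta0 tb0 by (simp add: d_def)
  have inT: "\<And>t. \<bar>t\<bar> < d \<Longrightarrow> t \<in> {ta..tb}" using d_def by auto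
  have I0: "(0::real) \<in> {0..2*L}" and I2: "2*L \<in> {0..2*L}" using L2 by auto
  have m0: "snd (Ds g (0,0)) = 0" using Gs0[OF I0] th_ends[OF x0 xL] by (simp add: Tex_def)
  have M0: "snd (Ds g (2*L,0)) = 0" using Gs0[OF I2] th_ends[OF x0 xL] by (simp add: Tex_def)
  have dm: "\<And>t. \<bar>t\<bar> < d \<Longrightarrow> ((\<lambda>t. snd (Ds g (0,t))) has_real_derivative snd (Dt (Ds g) (0,t))) (at t)"
    using vd_snd[OF sm_t[OF sms[OF sm] U inU[OF I0 inT]]] by blast
  have dm1: "((\<lambda>t. snd (Dt (Ds g) (0,t))) has_real_derivative snd (Dt (Dt (Ds g)) (0,0))) (at 0)"
    using vd_snd[OF sm_t[OF smt[OF sms[OF sm]] U inU[OF I0 T0]]] .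
  have mn: "\<And>t. \<bar>t\<bar> < d \<Longrightarrow> snd (Ds g (0,0)) \<le> snd (Ds g (0,t))"
    using m0 y0_nonneg inT by simp
  note r = min_second[OF d dm dm1 mn]
  show "snd (Ds (Dt g) (0,0)) = 0" using r(1) sw1[OF inU0[OF I0]] by simp
  show "0 \<le> snd (Ds (Dt (Dt g)) (0,0))" using r(2) sw3[OF inU0[OF I0]] by simp
  have dM: "\<And>t. \<bar>t\<bar> < d \<Longrightarrow> ((\<lambda>t. - snd (Ds g (2*L,t))) has_real_derivative - snd (Dt (Ds g) (2*L,t))) (at t)"
    using DERIV_minus[OF vd_snd[OF sm_t[OF sms[OF sm] U inU[OF I2 inT]]]] by blast
  have dM1: "((\<lambda>t. - snd (Dt (Ds g) (2*L,t))) has_real_derivative - snd (Dt (Dt (Ds g)) (2*L,0))) (at 0)"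
    using DERIV_minus[OF vd_snd[OF sm_t[OF smt[OF sms[OF sm]] U inU[OF I2 T0]]]] .
  have Mn: "\<And>t. \<bar>t\<bar> < d \<Longrightarrow> - snd (Ds g (2*L,0)) \<le> - snd (Ds g (2*L,t))"
    using M0 y2L_nonpos inT by simp
  note R = min_second[OF d dM dM1 Mn]
  show "snd (Ds (Dt g) (2*L,0)) = 0" using R(1) sw1[OF inU0[OF I2]] by simp
  show "snd (Ds (Dt (Dt g)) (2*L,0)) \<le> 0" using R(2) sw3[OF inU0[OF I2]] by simp
qed

lemma main_result:
  assumes vel: "\<forall>s\<in>{0..2*L}. velocity {ta..tb} V s = ph s *\<^sub>R normal L (gamma_ex x0 L) s + pt s *\<^sub>R dv {0..2*L} (gamma_ex x0 L) s"
    and acc: "\<forall>s\<in>{0..2*L}. accel {ta..tb} V s = ps s *\<^sub>R normal L (gamma_ex x0 L) s + pst s *\<^sub>R dv {0..2*L} (gamma_ex x0 L) s"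
  shows "\<forall>t\<in>{ta..tb}. ((\<lambda>t. Fen L (\<lambda>s. V s t)) has_real_derivative integral {0..2*L} (\<lambda>s. Kpf g s t)) (at t within {ta..tb})"
    "((\<lambda>t. integral {0..2*L} (\<lambda>s. Kpf g s t)) has_real_derivative
        (Qform x0 L ph pt ps
         + ((dv {0..2*L} ps (2*L) - 2 * dv {0..2*L} ph (2*L) * dv {0..2*L} pt (2*L)) / (curv L (gamma_ex x0 L) (2*L))\<^sup>2
          - (dv {0..2*L} ps 0 - 2 * dv {0..2*L} ph 0 * dv {0..2*L} pt 0) / (curv L (gamma_ex x0 L) 0)\<^sup>2)))
       (at 0 within {ta..tb})"
    "\<And>s. s \<in> {0..2*L} \<Longrightarrow> dv {0..2*L} ph s = phi1 x0 L (Dt g) s"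
    "\<And>s. s \<in> {0..2*L} \<Longrightarrow> dv {0..2*L} ps s = phi1 x0 L (Dt (Dt g)) s"
    "\<And>s. s \<in> {0..2*L} \<Longrightarrow> curv L (gamma_ex x0 L) s = HH x0 L s"
proof -
  note X = smt[OF sm] and Y = smt[OF smt[OF sm]]
  note ge = curv_gamma_eqs[OF x0 xL]
  have Xe: "Dt g (s,0) = ph s *\<^sub>R Nex x0 L s + pt s *\<^sub>R Tex x0 L s" if s: "s \<in> {0..2*L}" for s
    using vel s vel_eq[OF s] ge[OF s] by simp
  have Ye: "Dt (Dt g) (s,0) = ps s *\<^sub>R Nex x0 L s + pst s *\<^sub>R Tex x0 L s" if s: "s \<in> {0..2*L}" for s
    using acc s acc_eq[OF s] ge[OF s] by simp
  have e0: "ph s = phi0 x0 L (Dt g) s" "pt s = tau0 x0 L (Dt g) s" "ps s = phi0 x0 L (Dt (Dt g)) s"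
    if s: "s \<in> {0..2*L}" for s
    unfolding phi0_def tau0_def Xe[OF s] Ye[OF s] cN_add cT_add cN_scale cT_scale TN_facts by simp_all
  have e1: "dv {0..2*L} ph s = phi1 x0 L (Dt g) s" if s: "s \<in> {0..2*L}" for s
    by (rule dv_eqon[OF L2 s]) (use e0 in simp, rule rd_within, rule phi0_deriv[OF X s])
  have e2: "dv {0..2*L} (dv {0..2*L} ph) s = phi2 x0 L (Dt g) s" if s: "s \<in> {0..2*L}" for s
    by (rule dv_eqon[OF L2 s]) (use e1 in simp, rule rd_within, rule phi1_deriv[OF X s])
  have e3: "dv {0..2*L} pt s = tau1 x0 L (Dt g) s" if s: "s \<in> {0..2*L}" for s
    by (rule dv_eqon[OF L2 s]) (use e0 in simp, rule rd_within, rule tau0_deriv[OF X s])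
  have e4: "dv {0..2*L} ps s = phi1 x0 L (Dt (Dt g)) s" if s: "s \<in> {0..2*L}" for s
    by (rule dv_eqon[OF L2 s]) (use e0 in simp, rule rd_within, rule phi0_deriv[OF Y s])
  show "\<And>s. s \<in> {0..2*L} \<Longrightarrow> dv {0..2*L} ph s = phi1 x0 L (Dt g) s" by (rule e1)
  show "\<And>s. s \<in> {0..2*L} \<Longrightarrow> dv {0..2*L} ps s = phi1 x0 L (Dt (Dt g)) s" by (rule e4)
  show "\<And>s. s \<in> {0..2*L} \<Longrightarrow> curv L (gamma_ex x0 L) s = HH x0 L s" using ge by blast
  show "\<forall>t\<in>{ta..tb}. ((\<lambda>t. Fen L (\<lambda>s. V s t)) has_real_derivative integral {0..2*L} (\<lambda>s. Kpf g s t)) (at t within {ta..tb})"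
    using Fen_deriv by blast
  have Q: "Qform x0 L ph pt ps = integral {0..2*L} (Aint x0 L g) + lambda_ex x0 L * integral {0..2*L} (Bint x0 L g)"
  proof -
    have a: "integral {0..2*L} (\<lambda>s. 2 * curv L (gamma_ex x0 L) s * (ph s)\<^sup>2 - 2 * (dv {0..2*L} ph s)\<^sup>2 / curv L (gamma_ex x0 L) s
                         + 2 * (dv {0..2*L} (dv {0..2*L} ph) s)\<^sup>2 / curv L (gamma_ex x0 L) s ^ 3) = integral {0..2*L} (Aint x0 L g)"
      by (rule integral_cong) (simp add: Aint_def ge e0 e1 e2)
    have b: "integral {0..2*L} (\<lambda>s. ps s + curv L (gamma_ex x0 L) s * (pt s)\<^sup>2 + 2 * ph s * dv {0..2*L} pt s) = integral {0..2*L} (Bint x0 L g)"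
      by (rule integral_cong) (simp add: Bint_def ge e0 e3)
    show ?thesis unfolding Qform_def Let_def a b ..
  qed
  have I0: "(0::real) \<in> {0..2*L}" and I2: "2*L \<in> {0..2*L}" using L2 by auto
  have hz: "hh x0 L s \<noteq> 0" if "s \<in> {0..2*L}" for s using hh_pos[OF x0 xL inO[OF that]] by simp
  have B: "(dv {0..2*L} ps s - 2 * dv {0..2*L} ph s * dv {0..2*L} pt s) / (curv L (gamma_ex x0 L) s)\<^sup>2 = Pf x0 L g s"
    if s: "s = 0 \<or> s = 2*L" for s
  proof -
    have si: "s \<in> {0..2*L}" using s L2 by auto
    show ?thesis unfolding P_end[OF s] e1[OF si] e3[OF si] e4[OF si] ge[OF si] HH_def[OF x0 xL]
      using hz[OF si] by (simp add: field_simps)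
  qed
  show "((\<lambda>t. integral {0..2*L} (\<lambda>s. Kpf g s t)) has_real_derivative
        (Qform x0 L ph pt ps
         + ((dv {0..2*L} ps (2*L) - 2 * dv {0..2*L} ph (2*L) * dv {0..2*L} pt (2*L)) / (curv L (gamma_ex x0 L) (2*L))\<^sup>2
          - (dv {0..2*L} ps 0 - 2 * dv {0..2*L} ph 0 * dv {0..2*L} pt 0) / (curv L (gamma_ex x0 L) 0)\<^sup>2)))
       (at 0 within {ta..tb})"
    unfolding B[of 0, simplified] B[of "2*L", simplified] Q using f1_deriv integral_formula by simp
qed

end

theorem mainTheorem10:
  fixes x0 L :: real
  assumes "0 < 3 * x0" and "3 * x0 < L"
  defines "\<gamma> \<equiv> gamma_ex x0 L"
      and "I \<equiv> {0..2*L}"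
      and "H \<equiv> curv L (gamma_ex x0 L)"
  shows
   "(\<forall>V tV \<phi> \<phi>\<tau> \<psi> \<psi>\<tau>.
       one_sided_admissible_variation x0 L \<gamma> tV V
       \<and> (\<forall>s\<in>I. velocity {0..tV} V s = \<phi> s *\<^sub>R normal L \<gamma> s + \<phi>\<tau> s *\<^sub>R dv I \<gamma> s)
       \<and> (\<forall>s\<in>I. accel {0..tV} V s = \<psi> s *\<^sub>R normal L \<gamma> s + \<psi>\<tau> s *\<^sub>R dv I \<gamma> s)
     \<longrightarrow> (\<exists>f1.
           (\<forall>t\<in>{0..tV}. ((\<lambda>t. Fen L (\<lambda>s. V s t)) has_real_derivative f1 t) (at t within {0..tV}))
         \<and> (f1 has_real_derivative
              (Qform x0 L \<phi> \<phi>\<tau> \<psi>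
               + ((dv I \<psi> (2*L) - 2 * dv I \<phi> (2*L) * dv I \<phi>\<tau> (2*L)) / (H (2*L))\<^sup>2
                  - (dv I \<psi> 0 - 2 * dv I \<phi> 0 * dv I \<phi>\<tau> 0) / (H 0)\<^sup>2)))
             (at 0 within {0..tV})))
  \<and> (\<forall>V tV \<phi> \<phi>\<tau> \<psi> \<psi>\<tau>.
       admissible_variation x0 L \<gamma> tV V
       \<and> (\<forall>s\<in>I. velocity {-tV..tV} V s = \<phi> s *\<^sub>R normal L \<gamma> s + \<phi>\<tau> s *\<^sub>R dv I \<gamma> s)
       \<and> (\<forall>s\<in>I. accel {-tV..tV} V s = \<psi> s *\<^sub>R normal L \<gamma> s + \<psi>\<tau> s *\<^sub>R dv I \<gamma> s)
     \<longrightarrow> dv I \<phi> 0 = 0 \<and> dv I \<phi> (2*L) = 0 \<and> dv I \<psi> 0 \<le> 0 \<and> dv I \<psi> (2*L) \<ge> 0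
       \<and> (\<exists>f1.
           (\<forall>t\<in>{-tV..tV}. ((\<lambda>t. Fen L (\<lambda>s. V s t)) has_real_derivative f1 t) (at t within {-tV..tV}))
         \<and> (f1 has_real_derivative
              (Qform x0 L \<phi> \<phi>\<tau> \<psi> + (dv I \<psi> (2*L) / (H (2*L))\<^sup>2 - dv I \<psi> 0 / (H 0)\<^sup>2))) (at 0))
       \<and> Qform x0 L \<phi> \<phi>\<tau> \<psi> + (dv I \<psi> (2*L) / (H (2*L))\<^sup>2 - dv I \<psi> 0 / (H 0)\<^sup>2) \<ge> Qform x0 L \<phi> \<phi>\<tau> \<psi>)"
proof -
  have x0: "0 < x0" and xL: "3 * x0 < L" using assms(1,2) by auto
  have L2: "0 < 2 * L" using L_pos[OF x0 xL] by simp
  note I0 = varctx.intro[OF x0 xL]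
  show ?thesis
    unfolding \<gamma>_def I_def H_def
  proof (rule conjI; intro allI impI)
    fix V tV \<phi> \<phi>\<tau> \<psi> \<psi>\<tau>
    assume h: "one_sided_admissible_variation x0 L (gamma_ex x0 L) tV V \<and>
       (\<forall>s\<in>{0..2 * L}. velocity {0..tV} V s = \<phi> s *\<^sub>R normal L (gamma_ex x0 L) s + \<phi>\<tau> s *\<^sub>R dv {0..2 * L} (gamma_ex x0 L) s) \<and>
       (\<forall>s\<in>{0..2 * L}. accel {0..tV} V s = \<psi> s *\<^sub>R normal L (gamma_ex x0 L) s + \<psi>\<tau> s *\<^sub>R dv {0..2 * L} (gamma_ex x0 L) s)"
    then have tV: "0 < tV" and var: "variation x0 L (gamma_ex x0 L) {0..tV} V"
      and vel: "\<forall>s\<in>{0..2 * L}. velocity {0..tV} V s = \<phi> s *\<^sub>R normal L (gamma_ex x0 L) s + \<phi>\<tau> s *\<^sub>R dv {0..2 * L} (gamma_ex x0 L) s"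
      and acc: "\<forall>s\<in>{0..2 * L}. accel {0..tV} V s = \<psi> s *\<^sub>R normal L (gamma_ex x0 L) s + \<psi>\<tau> s *\<^sub>R dv {0..2 * L} (gamma_ex x0 L) s"
      unfolding one_sided_admissible_variation_def by auto
    from var obtain U g where U: "open U" and sub: "{0..2*L} \<times> {0..tV} \<subseteq> U" and sm: "smooth_open U g"
      and eq: "\<forall>x\<in>{0..2*L} \<times> {0..tV}. g x = V (fst x) (snd x)"
      and V0: "\<forall>s\<in>{0..2*L}. V s 0 = gamma_ex x0 L s" and adm: "\<forall>t\<in>{0..tV}. admissible x0 L (\<lambda>s. V s t)"
      unfolding variation_def Cinf_on_def by blast
    interpret varctx x0 L 0 tV U g V
      by (rule I0) (use tV U sub sm eq V0 adm in auto)
    note mr = main_result[OF vel acc]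
    show "\<exists>f1. (\<forall>t\<in>{0..tV}. ((\<lambda>t. Fen L (\<lambda>s. V s t)) has_real_derivative f1 t) (at t within {0..tV})) \<and>
         (f1 has_real_derivative
          Qform x0 L \<phi> \<phi>\<tau> \<psi> +
          ((dv {0..2 * L} \<psi> (2 * L) - 2 * dv {0..2 * L} \<phi> (2 * L) * dv {0..2 * L} \<phi>\<tau> (2 * L)) / (curv L (gamma_ex x0 L) (2 * L))\<^sup>2 -
           (dv {0..2 * L} \<psi> 0 - 2 * dv {0..2 * L} \<phi> 0 * dv {0..2 * L} \<phi>\<tau> 0) / (curv L (gamma_ex x0 L) 0)\<^sup>2))
          (at 0 within {0..tV})"
      apply (rule exI[where x="\<lambda>t. integral {0..2*L} (\<lambda>s. Kpf g s t)"])
      using mr(1,2) by blast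
  next
    fix V tV \<phi> \<phi>\<tau> \<psi> \<psi>\<tau>
    assume h: "admissible_variation x0 L (gamma_ex x0 L) tV V \<and>
       (\<forall>s\<in>{0..2 * L}. velocity {- tV..tV} V s = \<phi> s *\<^sub>R normal L (gamma_ex x0 L) s + \<phi>\<tau> s *\<^sub>R dv {0..2 * L} (gamma_ex x0 L) s) \<and>
       (\<forall>s\<in>{0..2 * L}. accel {- tV..tV} V s = \<psi> s *\<^sub>R normal L (gamma_ex x0 L) s + \<psi>\<tau> s *\<^sub>R dv {0..2 * L} (gamma_ex x0 L) s)"
    then have tV: "0 < tV" and var: "variation x0 L (gamma_ex x0 L) {-tV..tV} V"
      and vel: "\<forall>s\<in>{0..2 * L}. velocity {-tV..tV} V s = \<phi> s *\<^sub>R normal L (gamma_ex x0 L) s + \<phi>\<tau> s *\<^sub>R dv {0..2 * L} (gamma_ex x0 L) s"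
      and acc: "\<forall>s\<in>{0..2 * L}. accel {-tV..tV} V s = \<psi> s *\<^sub>R normal L (gamma_ex x0 L) s + \<psi>\<tau> s *\<^sub>R dv {0..2 * L} (gamma_ex x0 L) s"
      unfolding admissible_variation_def by auto
    from var obtain U g where U: "open U" and sub: "{0..2*L} \<times> {-tV..tV} \<subseteq> U" and sm: "smooth_open U g"
      and eq: "\<forall>x\<in>{0..2*L} \<times> {-tV..tV}. g x = V (fst x) (snd x)"
      and V0: "\<forall>s\<in>{0..2*L}. V s 0 = gamma_ex x0 L s" and adm: "\<forall>t\<in>{-tV..tV}. admissible x0 L (\<lambda>s. V s t)"
      unfolding variation_def Cinf_on_def by blast
    interpret varctx x0 L "-tV" tV U g V
      by (rule I0) (use tV U sub sm eq V0 adm in auto)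
    note mr = main_result[OF vel acc]
    have s0: "(0::real) \<in> {0..2*L}" and s2: "2*L \<in> {0..2*L}" using L2 by auto
    have es1: "snd (Ds (Dt g) (0,0)) = 0" "0 \<le> snd (Ds (Dt (Dt g)) (0,0))"
      "snd (Ds (Dt g) (2*L,0)) = 0" "snd (Ds (Dt (Dt g)) (2*L,0)) \<le> 0"
      using end_signs tV by auto
    have N0: "Nex x0 L 0 = (0, -1)" "Nex x0 L (2*L) = (0, -1)"
      unfolding Nex_def th_ends[OF x0 xL] by auto
    have cz: "cT x0 L 0 s = 0" for s unfolding cT_def by (simp add: ip_zero)
    have dphi0: "dv {0..2*L} \<phi> 0 = 0"
      unfolding mr(3)[OF s0] phi1_def ends_X[of 0, simplified] cz cN_def N0 ip_def using es1 by simp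
    have dphi2: "dv {0..2*L} \<phi> (2*L) = 0"
      unfolding mr(3)[OF s2] phi1_def ends_X[of "2*L", simplified] cz cN_def N0 ip_def using es1 by simp
    have dpsi0: "dv {0..2*L} \<psi> 0 \<le> 0"
      unfolding mr(4)[OF s0] phi1_def ends_X[of 0, simplified] cz cN_def N0 ip_def using es1 by simp
    have dpsi2: "dv {0..2*L} \<psi> (2*L) \<ge> 0"
      unfolding mr(4)[OF s2] phi1_def ends_X[of "2*L", simplified] cz cN_def N0 ip_def using es1 by simp
    have int0: "at (0::real) within {-tV..tV} = at 0"
      by (rule at_within_interior) (use tV in simp)
    have d2: "((\<lambda>t. integral {0..2*L} (\<lambda>s. Kpf g s t)) has_real_derivative
        (Qform x0 L \<phi> \<phi>\<tau> \<psi> + (dv {0..2 * L} \<psi> (2 * L) / (curv L (gamma_ex x0 L) (2 * L))\<^sup>2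
           - dv {0..2 * L} \<psi> 0 / (curv L (gamma_ex x0 L) 0)\<^sup>2))) (at 0)"
      using mr(2) unfolding int0 dphi0 dphi2 by simp
    show "dv {0..2 * L} \<phi> 0 = 0 \<and> dv {0..2 * L} \<phi> (2 * L) = 0 \<and> dv {0..2 * L} \<psi> 0 \<le> 0 \<and> 0 \<le> dv {0..2 * L} \<psi> (2 * L) \<and>
       (\<exists>f1. (\<forall>t\<in>{- tV..tV}. ((\<lambda>t. Fen L (\<lambda>s. V s t)) has_real_derivative f1 t) (at t within {- tV..tV})) \<and>
             (f1 has_real_derivative
              Qform x0 L \<phi> \<phi>\<tau> \<psi> +
              (dv {0..2 * L} \<psi> (2 * L) / (curv L (gamma_ex x0 L) (2 * L))\<^sup>2 - dv {0..2 * L} \<psi> 0 / (curv L (gamma_ex x0 L) 0)\<^sup>2))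
              (at 0)) \<and>
       Qform x0 L \<phi> \<phi>\<tau> \<psi> \<le> Qform x0 L \<phi> \<phi>\<tau> \<psi> +
        (dv {0..2 * L} \<psi> (2 * L) / (curv L (gamma_ex x0 L) (2 * L))\<^sup>2 - dv {0..2 * L} \<psi> 0 / (curv L (gamma_ex x0 L) 0)\<^sup>2)"
    proof (intro conjI)
      show "\<exists>f1. (\<forall>t\<in>{- tV..tV}. ((\<lambda>t. Fen L (\<lambda>s. V s t)) has_real_derivative f1 t) (at t within {- tV..tV})) \<and>
             (f1 has_real_derivative
              Qform x0 L \<phi> \<phi>\<tau> \<psi> +
              (dv {0..2 * L} \<psi> (2 * L) / (curv L (gamma_ex x0 L) (2 * L))\<^sup>2 - dv {0..2 * L} \<psi> 0 / (curv L (gamma_ex x0 L) 0)\<^sup>2))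
              (at 0)"
        apply (rule exI[where x="\<lambda>t. integral {0..2*L} (\<lambda>s. Kpf g s t)"])
        using mr(1) d2 by blast
      have "0 \<le> dv {0..2 * L} \<psi> (2 * L) / (curv L (gamma_ex x0 L) (2 * L))\<^sup>2" using dpsi2 by simp
      moreover have "dv {0..2 * L} \<psi> 0 / (curv L (gamma_ex x0 L) 0)\<^sup>2 \<le> 0" using dpsi0 by (simp add: divide_nonpos_nonneg)
      ultimately show "Qform x0 L \<phi> \<phi>\<tau> \<psi> \<le> Qform x0 L \<phi> \<phi>\<tau> \<psi> +
        (dv {0..2 * L} \<psi> (2 * L) / (curv L (gamma_ex x0 L) (2 * L))\<^sup>2 - dv {0..2 * L} \<psi> 0 / (curv L (gamma_ex x0 L) 0)\<^sup>2)"
        by simp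
    qed (use dphi0 dphi2 dpsi0 dpsi2 in auto)
  qed
qed


end
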